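(* The conclusion of the erosion leader-election theorem holds also in 2D geometric space: if $S$ is a finite nonempty set of $n$ nodes of the triangular lattice $G_\Delta$ that is connected and contractible, then under an unfair sequential adversary, in every execution of the erosion leader-election system on $S$, at no time do two distinct amoebots have $\mathtt{leader}=\mathrm{true}$, once set $\mathtt{leader}=\mathrm{true}$ is never unset, and within $O(n)$ rounds exactly one amoebot has $\mathtt{leader}=\mathrm{true}$.
   Context: $G_\Delta$ is the triangular lattice, viewed as one of the planar triangular sublattices of $G_{\mathrm{FCC}}$ (the graph on $\{(x,y,z)\in\mathbb{Z}^3: x+y+z\text{ even}\}$ with adjacency iff Euclidean distance $\sqrt2$), e.g. the nodes of $G_{\mathrm{FCC}}$ in a plane $x+y+z=0$; each node has 6 neighbors. A finite node set $S$ of $G_\Delta$ is connected if its induced subgraph is connected and contractible if the union of the closed hexagons of the hexagonal tiling dual to $G_\Delta$ corresponding to nodes of $S$ is contractible. Each node $A\in S$ hosts an amoebot with neighbors $N(A)$ = nodes of $S$ adjacent to $A$, and variables $\mathtt{candidate}\in\{\mathrm{null},\mathrm{true},\mathrm{false}\}$ (initially null), $\mathtt{leader}$ (initially false). Let $K(A)=\{B\in N(A):B.\mathtt{candidate}=\mathrm{true}\}$; CanErode$(A)$ holds iff $|K(A)|=1$, or $2\le|K(A)|\le5$ and $K(A)$ induces a connected subgraph, or $K(A)=\{B,D\}$ and some candidate $C\ne A$ adjacent to $B,D$ makes $A,B,C,D$ a chordless 4-cycle (this last case never occurs in $G_\Delta$). Actions: Setup (enabled iff $\mathtt{candidate}=\mathrm{null}$;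 sets it to true); Erode (enabled iff $A.\mathtt{candidate}=\mathrm{true}$, all neighbors have $\mathtt{candidate}\ne\mathrm{null}$, and CanErode$(A)$; sets $A.\mathtt{candidate}=\mathrm{false}$); DeclareLeader (enabled iff $A.\mathtt{candidate}=\mathrm{true}$ and all neighbors have $\mathtt{candidate}=\mathrm{false}$; sets $A.\mathtt{leader}=\mathrm{true}$). Unfair sequential adversary: at each step an arbitrary enabled amoebot atomically executes one of its enabled actions. Rounds: round $i$ starts at $t_i$ ($t_0=0$) and ends at the earliest $t_{i+1}>t_i$ by which every amoebot enabled at $t_i$ has executed an action or become disabled at some time in $(t_i,t_{i+1}]$. *)

theory Defs
  imports "HOL-Analysis.Analysis"
begin

type_synonym node = "int \<times> int \<times> int"

definition fcc_node :: "node \<Rightarrow> bool" where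
  "fcc_node p \<longleftrightarrow> (case p of (x, y, z) \<Rightarrow> even (x + y + z))"

definition tri_node :: "node \<Rightarrow> bool" where
  "tri_node p \<longleftrightarrow> fcc_node p \<and> (case p of (x, y, z) \<Rightarrow> x + y + z = 0)"

definition adj :: "node \<Rightarrow> node \<Rightarrow> bool" where
  "adj p q \<longleftrightarrow> tri_node p \<and> tri_node q \<and>
     (case p of (x1, y1, z1) \<Rightarrow> case q of (x2, y2, z2) \<Rightarrow>
        (x1 - x2)^2 + (y1 - y2)^2 + (z1 - z2)^2 = 2)"

definition induced_connected :: "node set \<Rightarrow> bool" where
  "induced_connected T \<longleftrightarrow>
     (\<forall>u\<in>T. \<forall>v\<in>T. (u, v) \<in> {(a, b). a \<in> T \<and> b \<in> T \<and> adj a b}\<^sup>*)"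

definition embed :: "node \<Rightarrow> real \<times> real \<times> real" where
  "embed p = (case p of (x, y, z) \<Rightarrow> (real_of_int x, real_of_int y, real_of_int z))"

text \<open>The closed hexagon of node p: its (closed) Voronoi cell within the plane x+y+z=0.\<close>
definition hexagon :: "node \<Rightarrow> (real \<times> real \<times> real) set" where
  "hexagon p = {v. (case v of (a, b, c) \<Rightarrow> a + b + c = 0) \<and>
                   (\<forall>q. tri_node q \<longrightarrow> dist v (embed p) \<le> dist v (embed q))}"

definition lattice_contractible :: "node set \<Rightarrow> bool" where
  "lattice_contractible S \<longleftrightarrow> contractible (\<Union>p\<in>S. hexagon p)"

record conf =
  cand :: "node \<Rightarrow> bool option"   \<comment> \<open>None = null\<close>
  ldr  :: "node \<Rightarrow> bool"

definition nbrs :: "node set \<Rightarrow> node \<Rightarrow> node set" where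
  "nbrs S A = {B \<in> S. adj A B}"

definition Kset :: "node set \<Rightarrow> conf \<Rightarrow> node \<Rightarrow> node set" where
  "Kset S c A = {B \<in> nbrs S A. cand c B = Some True}"

definition can_erode :: "node set \<Rightarrow> conf \<Rightarrow> node \<Rightarrow> bool" where
  "can_erode S c A \<longleftrightarrow>
     card (Kset S c A) = 1 \<or>
     (2 \<le> card (Kset S c A) \<and> card (Kset S c A) \<le> 5 \<and> induced_connected (Kset S c A)) \<or>
     (\<exists>B D. B \<noteq> D \<and> Kset S c A = {B, D} \<and>
        (\<exists>C\<in>S. C \<noteq> A \<and> cand c C = Some True \<and> adj B C \<and> adj C D \<and>
               adj A B \<and> adj D A \<and> \<not> adj A C \<and> \<not> adj B D))"

datatype action = Setup | Erode | DeclareLeader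

fun enabled_act :: "node set \<Rightarrow> conf \<Rightarrow> node \<Rightarrow> action \<Rightarrow> bool" where
  "enabled_act S c A Setup \<longleftrightarrow> cand c A = None"
| "enabled_act S c A Erode \<longleftrightarrow> cand c A = Some True \<and>
     (\<forall>B\<in>nbrs S A. cand c B \<noteq> None) \<and> can_erode S c A"
| "enabled_act S c A DeclareLeader \<longleftrightarrow> cand c A = Some True \<and>
     (\<forall>B\<in>nbrs S A. cand c B = Some False)"

fun apply_act :: "conf \<Rightarrow> node \<Rightarrow> action \<Rightarrow> conf" where
  "apply_act c A Setup = c\<lparr>cand := (cand c)(A := Some True)\<rparr>"
| "apply_act c A Erode = c\<lparr>cand := (cand c)(A := Some False)\<rparr>"
| "apply_act c A DeclareLeader = c\<lparr>ldr := (ldr c)(A := True)\<rparr>"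

definition enabled :: "node set \<Rightarrow> conf \<Rightarrow> node \<Rightarrow> bool" where
  "enabled S c A \<longleftrightarrow> A \<in> S \<and> (\<exists>a. enabled_act S c A a)"

text \<open>An execution under the unfair sequential adversary: configuration c t at time t,
  acts t = the (amoebot, action) executed in the step from time t to time t+1.
  If no amoebot is enabled, the system is terminated and stays unchanged (None).\<close>
definition execution :: "node set \<Rightarrow> (nat \<Rightarrow> conf) \<Rightarrow> (nat \<Rightarrow> (node \<times> action) option) \<Rightarrow> bool" where
  "execution S c acts \<longleftrightarrow>
     (\<forall>A\<in>S. cand (c 0) A = None \<and> \<not> ldr (c 0) A) \<and>
     (\<forall>t. case acts t of
            Some (A, a) \<Rightarrow> A \<in> S \<and> enabled_act S (c t) A a \<and> c (Suc t) = apply_act (c t) A a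
          | None \<Rightarrow> (\<forall>A\<in>S. \<not> enabled S (c t) A) \<and> c (Suc t) = c t)"

definition round_done :: "node set \<Rightarrow> (nat \<Rightarrow> conf) \<Rightarrow> (nat \<Rightarrow> (node \<times> action) option) \<Rightarrow> nat \<Rightarrow> nat \<Rightarrow> bool" where
  "round_done S c acts t0 t \<longleftrightarrow> t0 < t \<and>
     (\<forall>A. enabled S (c t0) A \<longrightarrow>
        (\<exists>s. t0 < s \<and> s \<le> t \<and> ((\<exists>a. acts (s - 1) = Some (A, a)) \<or> \<not> enabled S (c s) A)))"

inductive round_start :: "node set \<Rightarrow> (nat \<Rightarrow> conf) \<Rightarrow> (nat \<Rightarrow> (node \<times> action) option) \<Rightarrow> nat \<Rightarrow> nat \<Rightarrow> bool"
  for S c acts where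
  "round_start S c acts 0 0"
| "round_start S c acts i t \<Longrightarrow> \<exists>t'. round_done S c acts t t' \<Longrightarrow>
     round_start S c acts (Suc i) (LEAST t'. round_done S c acts t t')"

end

theory Submission
  imports Defs
begin


definition dir :: "nat \<Rightarrow> int \<times> int \<times> int" where
  "dir i = (if i mod 6 = 0 then (1,-1,0) else if i mod 6 = 1 then (1,0,-1)
    else if i mod 6 = 2 then (0,1,-1) else if i mod 6 = 3 then (-1,1,0)
    else if i mod 6 = 4 then (-1,0,1) else (0,-1,1))"

definition nb :: "node \<Rightarrow> nat \<Rightarrow> node" where
  "nb A i = (case A of (x,y,z) \<Rightarrow> case dir i of (a,b,c) \<Rightarrow> (x+a,y+b,z+c))"

lemma lt6: "{..<6::nat} = {0,1,2,3,4,5}" by auto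

lemma dir_image: "dir ` {..<6} = {(1,-1,0),(1,0,-1),(0,1,-1),(-1,1,0),(-1,0,1),(0,-1,1)}"
  by (auto simp: lt6 dir_def)

lemma sq_le1: "(a::int)^2 \<le> 2 \<Longrightarrow> a \<in> {-1,0,1}"
proof -
  assume "a^2 \<le> 2"
  have "\<bar>a\<bar> \<le> 1"
  proof (rule ccontr)
    assume "\<not> \<bar>a\<bar> \<le> 1"
    hence "2 \<le> \<bar>a\<bar>" by simp
    hence "2^2 \<le> \<bar>a\<bar>^2" by (rule power_mono) simp
    with \<open>a^2 \<le> 2\<close> show False by simp
  qed
  thus ?thesis by auto
qed

lemma unit_vec:
  fixes a b c :: int
  assumes "a+b+c = 0" "a^2+b^2+c^2 = 2"
  shows "\<exists>i<6. (a,b,c) = dir i"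
proof -
  have "a^2 \<le> 2" "b^2 \<le> 2" using assms(2) zero_le_power2[of a] zero_le_power2[of b] zero_le_power2[of c] by linarith+
  hence "a \<in> {-1,0,1}" "b \<in> {-1,0,1}" using sq_le1 by auto
  hence "c = -a-b" using assms by simp
  with \<open>a \<in> _\<close> \<open>b \<in> _\<close> assms(2) have "(a,b,c) \<in> dir ` {..<6}"
    unfolding dir_image by (elim insertE emptyE; simp)
  thus ?thesis by force
qed

lemma tri_node_iff: "tri_node (x,y,z) \<longleftrightarrow> x+y+z = 0"
  unfolding tri_node_def fcc_node_def by (simp only: prod.case) (metis even_zero)

lemma dir_simps: "dir 0 = (1,-1,0)" "dir 1 = (1,0,-1)" "dir 2 = (0,1,-1)"
  "dir 3 = (-1,1,0)" "dir 4 = (-1,0,1)" "dir 5 = (0,-1,1)"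
  by (simp_all add: dir_def)

lemma dir_Suc0: "dir (Suc 0) = (1,0,-1)" by (simp add: dir_def)

lemma dir_mod: "dir (i mod 6) = dir i" by (simp add: dir_def)

lemma nb_mod: "nb A (i mod 6) = nb A i" by (simp add: nb_def dir_mod)

lemma dir_sum: "(case dir i of (a,b,c) \<Rightarrow> a+b+c) = 0"
  by (simp add: dir_def)

lemma dir_sq: "(case dir i of (a,b,c) \<Rightarrow> a^2+b^2+c^2) = 2"
  by (simp add: dir_def)

lemma adj_coord: "adj (x1,y1,z1) (x2,y2,z2) \<longleftrightarrow> x1+y1+z1 = 0 \<and> x2+y2+z2 = 0 \<and>
   (\<exists>i<6. (x2-x1,y2-y1,z2-z1) = dir i)"
proof -
  have e: "(x1 - x2)^2 + (y1 - y2)^2 + (z1 - z2)^2 = (x2 - x1)^2 + (y2 - y1)^2 + (z2 - z1)^2"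
    by (simp add: power2_commute[of x1 x2] power2_commute[of y1 y2] power2_commute[of z1 z2])
  have d: "adj (x1,y1,z1) (x2,y2,z2) \<longleftrightarrow> x1+y1+z1 = 0 \<and> x2+y2+z2 = 0 \<and>
     (x2 - x1)^2 + (y2 - y1)^2 + (z2 - z1)^2 = 2"
    by (simp only: adj_def tri_node_iff prod.case e)
  show ?thesis
  proof
    assume "adj (x1,y1,z1) (x2,y2,z2)"
    hence h: "x1+y1+z1 = 0" "x2+y2+z2 = 0" "(x2 - x1)^2 + (y2 - y1)^2 + (z2 - z1)^2 = 2"
      using d by auto
    have "(x2-x1)+(y2-y1)+(z2-z1) = 0" using h by simp
    with h show "x1+y1+z1 = 0 \<and> x2+y2+z2 = 0 \<and> (\<exists>i<6. (x2-x1,y2-y1,z2-z1) = dir i)"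
      using unit_vec by blast
  next
    assume h: "x1+y1+z1 = 0 \<and> x2+y2+z2 = 0 \<and> (\<exists>i<6. (x2-x1,y2-y1,z2-z1) = dir i)"
    then obtain i where i: "(x2-x1,y2-y1,z2-z1) = dir i" by blast
    have "(case (x2-x1,y2-y1,z2-z1) of (a,b,c) \<Rightarrow> a^2+b^2+c^2) = 2" unfolding i by (rule dir_sq)
    hence "(x2 - x1)^2 + (y2 - y1)^2 + (z2 - z1)^2 = 2" by simp
    with h d show "adj (x1,y1,z1) (x2,y2,z2)" by blast
  qed
qed

lemma adj_sym: "adj A B \<Longrightarrow> adj B A"
proof -
  obtain x1 y1 z1 where A: "A = (x1,y1,z1)" by (cases A)
  obtain x2 y2 z2 where B: "B = (x2,y2,z2)" by (cases B)
  show "adj A B \<Longrightarrow> adj B A" unfolding A B adj_def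
    by (simp add: power2_commute[of x1 x2] power2_commute[of y1 y2] power2_commute[of z1 z2])
qed

lemma adj_irrefl: "\<not> adj A A"
  unfolding adj_def by (auto split: prod.splits)

lemma nb_coord: "nb (x,y,z) i = (x + fst (dir i), y + fst (snd (dir i)), z + snd (snd (dir i)))"
  by (simp add: nb_def split: prod.splits)

lemma dir_sum': "fst (dir i) + fst (snd (dir i)) + snd (snd (dir i)) = 0"
  by (simp add: dir_def)

lemma tri_nb: "tri_node A \<Longrightarrow> tri_node (nb A i)"
proof -
  assume "tri_node A"
  moreover obtain x y z where A: "A = (x,y,z)" by (cases A)
  ultimately have "x+y+z = 0" by (simp add: tri_node_iff)
  thus ?thesis unfolding A nb_coord tri_node_iff using dir_sum'[of i] by linarith
qed

lemma adj_iff_nb: "tri_node A \<Longrightarrow> adj A B \<longleftrightarrow> (\<exists>i<6. B = nb A i)"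
proof -
  assume t: "tri_node A"
  obtain x1 y1 z1 where A: "A = (x1,y1,z1)" by (cases A)
  obtain x2 y2 z2 where B: "B = (x2,y2,z2)" by (cases B)
  have s: "x1+y1+z1 = 0" using t A tri_node_iff by simp
  show ?thesis
  proof
    assume "adj A B"
    then obtain i where "i<6" "(x2-x1,y2-y1,z2-z1) = dir i" unfolding A B adj_coord by blast
    hence "B = nb A i" unfolding A B nb_coord by (metis add_diff_cancel_left' diff_add_cancel fst_conv snd_conv)
    thus "\<exists>i<6. B = nb A i" using \<open>i<6\<close> by blast
  next
    assume "\<exists>i<6. B = nb A i"
    then obtain i where i: "i<6" "B = nb A i" by blast
    hence d: "(x2-x1,y2-y1,z2-z1) = dir i" unfolding A B nb_coord by auto
    have "tri_node B" using tri_nb[OF t] i(2) by simp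
    hence "x2+y2+z2 = 0" using B tri_node_iff by simp
    thus "adj A B" unfolding A B adj_coord using s d i by blast
  qed
qed

lemma less6_cases: "i < (6::nat) \<Longrightarrow> (i = 0 \<Longrightarrow> P) \<Longrightarrow> (i = 1 \<Longrightarrow> P) \<Longrightarrow> (i = 2 \<Longrightarrow> P)
  \<Longrightarrow> (i = 3 \<Longrightarrow> P) \<Longrightarrow> (i = 4 \<Longrightarrow> P) \<Longrightarrow> (i = 5 \<Longrightarrow> P) \<Longrightarrow> P"
  by linarith

lemma ex6: "(\<exists>k<(6::nat). P k) \<longleftrightarrow> P 0 \<or> P 1 \<or> P 2 \<or> P 3 \<or> P 4 \<or> P 5"
proof -
  have "(\<exists>k<(6::nat). P k) = (\<exists>k\<in>{..<6}. P k)" by auto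
  also have "\<dots> = (P 0 \<or> P 1 \<or> P 2 \<or> P 3 \<or> P 4 \<or> P 5)" by (simp add: lt6)
  finally show ?thesis .
qed

lemma nb_inj: "i < 6 \<Longrightarrow> j < 6 \<Longrightarrow> nb A i = nb A j \<Longrightarrow> i = j"
proof -
  assume "i<6" "j<6" and h: "nb A i = nb A j"
  obtain x y z where A: "A = (x,y,z)" by (cases A)
  have "dir i = dir j" using h unfolding A nb_coord by (simp add: prod_eq_iff)
  thus "i = j" using \<open>i<6\<close> \<open>j<6\<close> unfolding dir_def by (simp split: if_splits)
qed

lemma adj_nb_nb: "tri_node A \<Longrightarrow> i < 6 \<Longrightarrow> j < 6 \<Longrightarrow>
   adj (nb A i) (nb A j) \<longleftrightarrow> (j = Suc i mod 6 \<or> i = Suc j mod 6)"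
proof -
  assume t: "tri_node A" and ij: "i < 6" "j < 6"
  obtain x y z where A: "A = (x,y,z)" by (cases A)
  have s: "x+y+z = 0" using t A tri_node_iff by simp
  have "adj (nb A i) (nb A j) \<longleftrightarrow> (\<exists>k<6. (fst (dir j) - fst (dir i), fst (snd (dir j)) - fst (snd (dir i)),
      snd (snd (dir j)) - snd (snd (dir i))) = dir k)"
    unfolding A nb_coord adj_coord using s dir_sum'[of i] dir_sum'[of j] by auto
  also have "\<dots> \<longleftrightarrow> (j = Suc i mod 6 \<or> i = Suc j mod 6)"
    unfolding ex6
    by (rule less6_cases[OF ij(1)]; rule less6_cases[OF ij(2)]; simp add: dir_simps dir_Suc0)
  finally show ?thesis .
qed



definition E :: "node set \<Rightarrow> (node \<times> node) set" where
  "E X = {(a,b). a \<in> X \<and> b \<in> X \<and> adj a b}"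

definition F :: "node set \<Rightarrow> (node \<times> node \<times> node) set" where
  "F X = {(a,b,c). a \<in> X \<and> b \<in> X \<and> c \<in> X \<and> adj a b \<and> adj b c \<and> adj a c}"

definition Pn :: "node set \<Rightarrow> node \<Rightarrow> (node \<times> node) set" where
  "Pn X a = {(b,c). b \<in> X \<and> c \<in> X \<and> adj a b \<and> adj b c \<and> adj a c}"

definition Nn :: "node set \<Rightarrow> node \<Rightarrow> node set" where
  "Nn X a = {b \<in> X. adj a b}"

definition chi6 :: "node set \<Rightarrow> int" where
  "chi6 X = 6 * int (card X) - 3 * int (card (E X)) + int (card (F X))"

definition Mi :: "node set \<Rightarrow> node \<Rightarrow> nat set" where
  "Mi X A = {i. i < 6 \<and> nb A i \<in> X}"
definition Ri :: "node set \<Rightarrow> node \<Rightarrow> nat set" where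
  "Ri X A = {i. i < 6 \<and> nb A i \<in> X \<and> nb A (Suc i mod 6) \<notin> X}"
definition Ti :: "node set \<Rightarrow> node \<Rightarrow> nat set" where
  "Ti X A = {i. i < 6 \<and> nb A i \<in> X \<and> nb A (Suc i mod 6) \<in> X}"

abbreviation "mi X A \<equiv> card (Mi X A)"
abbreviation "ri X A \<equiv> card (Ri X A)"
abbreviation "ti X A \<equiv> card (Ti X A)"

lemma fin_Mi: "finite (Mi X A)"
  by (rule finite_subset[of _ "{..<6}"]) (unfold Mi_def, blast, simp)
lemma fin_Ri: "finite (Ri X A)"
  by (rule finite_subset[of _ "{..<6}"]) (unfold Ri_def, blast, simp)
lemma fin_Ti: "finite (Ti X A)"
  by (rule finite_subset[of _ "{..<6}"]) (unfold Ti_def, blast, simp)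

lemma m_eq: "mi X A = ri X A + ti X A"
proof -
  have "Mi X A = Ri X A \<union> Ti X A" "Ri X A \<inter> Ti X A = {}" unfolding Mi_def Ri_def Ti_def by blast+
  thus ?thesis using fin_Ri fin_Ti card_Un_disjoint by metis
qed

lemma Mi_le6: "mi X A \<le> 6"
proof -
  have "Mi X A \<subseteq> {..<6}" unfolding Mi_def by blast
  thus ?thesis using card_mono[of "{..<6::nat}"] by fastforce
qed

lemma Ri_le_Mi: "ri X A \<le> mi X A" using m_eq by simp

lemma nb_ne: "tri_node A \<Longrightarrow> i < 6 \<Longrightarrow> nb A i \<noteq> A"
proof
  assume "tri_node A" "i < 6" "nb A i = A"
  hence "adj A A" using adj_iff_nb[of A A] by metis
  thus False using adj_irrefl by simp
qed

lemma Mi_remove: "tri_node A \<Longrightarrow> Mi (X - {A}) A = Mi X A"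
  using nb_ne[of A] unfolding Mi_def by blast

lemma Nn_card: assumes "tri_node A" shows "card (Nn X A) = mi X A"
proof -
  have "Nn X A = nb A ` Mi X A" unfolding Nn_def Mi_def adj_iff_nb[OF assms] by blast
  moreover have "inj_on (nb A) (Mi X A)" by (auto simp: inj_on_def Mi_def intro: nb_inj)
  ultimately show ?thesis by (simp add: card_image)
qed

lemma suc6: "i < 6 \<Longrightarrow> Suc i mod 6 < (6::nat)" by simp

lemma Pn_card: assumes "tri_node A" shows "card (Pn X A) = 2 * ti X A"
proof -
  let ?f = "\<lambda>i. (nb A i, nb A (Suc i mod 6))"
  let ?g = "\<lambda>i. (nb A (Suc i mod 6), nb A i)"
  have adjs: "\<And>i. i < 6 \<Longrightarrow> adj (nb A i) (nb A (Suc i mod 6))" 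
    using adj_nb_nb[OF assms] by simp
  have "Pn X A \<subseteq> ?f ` Ti X A \<union> ?g ` Ti X A"
  proof
    fix p assume "p \<in> Pn X A"
    then obtain b c where p: "p = (b,c)" "b \<in> X" "c \<in> X" "adj A b" "adj b c" "adj A c"
      unfolding Pn_def by blast
    then obtain i j where ij: "i < 6" "j < 6" "b = nb A i" "c = nb A j"
      using adj_iff_nb[OF assms] by metis
    hence "j = Suc i mod 6 \<or> i = Suc j mod 6" using adj_nb_nb[OF assms] p by simp
    thus "p \<in> ?f ` Ti X A \<union> ?g ` Ti X A"
    proof
      assume "j = Suc i mod 6"
      hence "i \<in> Ti X A" "p = ?f i" using ij p unfolding Ti_def by blast+
      thus ?thesis by blast
    next
      assume "i = Suc j mod 6"
      hence "j \<in> Ti X A" "p = ?g j" using ij p unfolding Ti_def by blast+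
      thus ?thesis by blast
    qed
  qed
  moreover have "?f ` Ti X A \<union> ?g ` Ti X A \<subseteq> Pn X A"
  proof
    fix p assume "p \<in> ?f ` Ti X A \<union> ?g ` Ti X A"
    then obtain i where i: "i \<in> Ti X A" "p = ?f i \<or> p = ?g i" by blast
    hence i6: "i < 6" "nb A i \<in> X" "nb A (Suc i mod 6) \<in> X" unfolding Ti_def by blast+
    have a1: "adj A (nb A i)" "adj A (nb A (Suc i mod 6))"
      using adj_iff_nb[OF assms] i6(1) suc6 by blast+
    have a2: "adj (nb A i) (nb A (Suc i mod 6))" "adj (nb A (Suc i mod 6)) (nb A i)"
      using adjs[OF i6(1)] adj_sym by blast+
    show "p \<in> Pn X A" using i(2) i6 a1 a2 unfolding Pn_def by blast
  qed
  ultimately have eq: "Pn X A = ?f ` Ti X A \<union> ?g ` Ti X A" by blast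
  have inj1: "inj_on ?f (Ti X A)" unfolding inj_on_def Ti_def using nb_inj by blast
  have inj2: "inj_on ?g (Ti X A)" unfolding inj_on_def Ti_def using nb_inj by blast
  have disj: "?f ` Ti X A \<inter> ?g ` Ti X A = {}"
  proof (rule ccontr)
    assume "?f ` Ti X A \<inter> ?g ` Ti X A \<noteq> {}"
    then obtain i j where "i \<in> Ti X A" "j \<in> Ti X A" "?f i = ?g j" by blast
    hence "i < 6" "j < 6" "nb A i = nb A (Suc j mod 6)" "nb A (Suc i mod 6) = nb A j"
      unfolding Ti_def by blast+
    hence "i = Suc j mod 6" "Suc i mod 6 = j" using nb_inj suc6 by blast+
    with \<open>i<6\<close> \<open>j<6\<close> show False by presburger
  qed
  have "card (Pn X A) = card (?f ` Ti X A) + card (?g ` Ti X A)"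
    unfolding eq by (rule card_Un_disjoint) (simp_all add: disj fin_Ti)
  also have "\<dots> = 2 * ti X A" using inj1 inj2 by (simp add: card_image)
  finally show ?thesis .
qed

definition tris :: "node set \<Rightarrow> bool" where "tris X \<longleftrightarrow> (\<forall>a\<in>X. tri_node a)"

lemma fin_E: "finite X \<Longrightarrow> finite (E X)"
  by (rule finite_subset[of _ "X \<times> X"]) (unfold E_def, blast, simp)

lemma fin_F: "finite X \<Longrightarrow> finite (F X)"
  by (rule finite_subset[of _ "X \<times> X \<times> X"]) (unfold F_def, blast, simp)

lemma fin_Pn: "finite X \<Longrightarrow> finite (Pn X a)"
  by (rule finite_subset[of _ "X \<times> X"]) (unfold Pn_def, blast, simp)

lemma fin_Nn: "finite X \<Longrightarrow> finite (Nn X a)"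
  by (rule finite_subset[of _ "X"]) (unfold Nn_def, blast, simp)

lemma E_sum: assumes "finite X" "tris X" shows "card (E X) = (\<Sum>a\<in>X. mi X a)"
proof -
  have "E X = Sigma X (Nn X)" unfolding E_def Nn_def Sigma_def by blast
  hence "card (E X) = (\<Sum>a\<in>X. card (Nn X a))" using assms(1) fin_Nn by simp
  also have "\<dots> = (\<Sum>a\<in>X. mi X a)" using assms(2) Nn_card unfolding tris_def by simp
  finally show ?thesis .
qed

lemma F_sum: assumes "finite X" "tris X" shows "card (F X) = (\<Sum>a\<in>X. 2 * ti X a)"
proof -
  have "F X = Sigma X (Pn X)" unfolding F_def Pn_def Sigma_def by blast
  hence "card (F X) = (\<Sum>a\<in>X. card (Pn X a))" using assms(1) fin_Pn by simp
  also have "\<dots> = (\<Sum>a\<in>X. 2 * ti X a)" using assms(2) Pn_card unfolding tris_def by simp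
  finally show ?thesis .
qed

lemma chi6_sum: assumes "finite X" "tris X"
  shows "chi6 X = (\<Sum>a\<in>X. 6 - int (mi X a) - 2 * int (ri X a))"
proof -
  have "chi6 X = 6 * int (card X) - 3 * (\<Sum>a\<in>X. int (mi X a)) + (\<Sum>a\<in>X. 2 * int (ti X a))"
    unfolding chi6_def E_sum[OF assms] F_sum[OF assms] by simp
  also have "\<dots> = (\<Sum>a\<in>X. 6 - 3 * int (mi X a) + 2 * int (ti X a))"
    by (simp add: sum.distrib sum_subtractf sum_distrib_left)
  also have "\<dots> = (\<Sum>a\<in>X. 6 - int (mi X a) - 2 * int (ri X a))"
    by (rule sum.cong) (simp_all add: m_eq)
  finally show ?thesis .
qed

lemma img_case: "t \<in> (\<lambda>(b,c). f b c) ` P \<Longrightarrow> (\<And>b c. t = f b c \<Longrightarrow> (b,c) \<in> P \<Longrightarrow> thesis) \<Longrightarrow> thesis"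
  by auto

lemma E_remove: assumes "finite X" "x \<in> X" "tri_node x"
  shows "card (E X) = card (E (X - {x})) + 2 * mi (X - {x}) x"
proof -
  let ?X = "X - {x}" let ?N = "Nn ?X x"
  have eq: "E X = E ?X \<union> ({x} \<times> ?N \<union> (\<lambda>b. (b,x)) ` ?N)"
    using assms(2) adj_sym adj_irrefl unfolding E_def Nn_def by blast
  have d1: "E ?X \<inter> ({x} \<times> ?N \<union> (\<lambda>b. (b,x)) ` ?N) = {}" unfolding E_def by blast
  have d2: "({x} \<times> ?N) \<inter> ((\<lambda>b. (b,x)) ` ?N) = {}" unfolding Nn_def by blast
  have f: "finite ?N" using fin_Nn assms(1) by blast
  have "card (E X) = card (E ?X) + card ({x} \<times> ?N \<union> (\<lambda>b. (b,x)) ` ?N)"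
    unfolding eq by (rule card_Un_disjoint) (use fin_E assms(1) f d1 in auto)
  also have "card ({x} \<times> ?N \<union> (\<lambda>b. (b,x)) ` ?N) = card ({x} \<times> ?N) + card ((\<lambda>b. (b,x)) ` ?N)"
    by (rule card_Un_disjoint) (use f d2 in auto)
  also have "card ((\<lambda>b. (b,x)) ` ?N) = card ?N" by (rule card_image) (auto simp: inj_on_def)
  also have "card ({x} \<times> ?N) = card ?N" by (rule card_cartesian_product_singleton)
  finally show ?thesis using Nn_card[OF assms(3)] by simp
qed

lemma F_remove: assumes "finite X" "x \<in> X" "tri_node x"
  shows "card (F X) = card (F (X - {x})) + 6 * ti (X - {x}) x"
proof -
  let ?X = "X - {x}" let ?P = "Pn ?X x"
  let ?f1 = "\<lambda>(b,c). (x,b,c)" let ?f2 = "\<lambda>(b,c). (b,x,c)" let ?f3 = "\<lambda>(b,c). (b,c,x)"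
  have eq: "F X = F ?X \<union> (?f1 ` ?P \<union> (?f2 ` ?P \<union> ?f3 ` ?P))"
  proof
    show "F X \<subseteq> F ?X \<union> (?f1 ` ?P \<union> (?f2 ` ?P \<union> ?f3 ` ?P))"
    proof
      fix t assume "t \<in> F X"
      then obtain a b c where t: "t = (a,b,c)" "a \<in> X" "b \<in> X" "c \<in> X" "adj a b" "adj b c" "adj a c"
        unfolding F_def by blast
      have ne: "a \<noteq> b" "b \<noteq> c" "a \<noteq> c" using t adj_irrefl by metis+
      show "t \<in> F ?X \<union> (?f1 ` ?P \<union> (?f2 ` ?P \<union> ?f3 ` ?P))"
      proof (cases "a = x")
        case True
        hence "(b,c) \<in> ?P" using t ne unfolding Pn_def by blast
        moreover have "t = ?f1 (b,c)" using t True by simp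
        ultimately have "t \<in> ?f1 ` ?P" by (rule rev_image_eqI)
        thus ?thesis by blast
      next
        case a: False
        show ?thesis
        proof (cases "b = x")
          case True
          hence "(a,c) \<in> ?P" using t ne adj_sym unfolding Pn_def by blast
          moreover have "t = ?f2 (a,c)" using t True by simp
        ultimately have "t \<in> ?f2 ` ?P" by (rule rev_image_eqI)
          thus ?thesis by blast
        next
          case b: False
          show ?thesis
          proof (cases "c = x")
            case True
            hence "(a,b) \<in> ?P" using t ne adj_sym unfolding Pn_def by blast
            moreover have "t = ?f3 (a,b)" using t True by simp
        ultimately have "t \<in> ?f3 ` ?P" by (rule rev_image_eqI)
            thus ?thesis by blast
          next
            case False
            thus ?thesis using t a b unfolding F_def by blast
          qed
        qed
      qed
    qed
  next
    have "F ?X \<subseteq> F X" unfolding F_def by blast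
    moreover have "?f1 ` ?P \<subseteq> F X"
    proof
      fix t assume "t \<in> ?f1 ` ?P"
      then obtain b c where "t = (x,b,c)" "(b,c) \<in> ?P" by (rule img_case)
      thus "t \<in> F X" using assms(2) unfolding F_def Pn_def by blast
    qed
    moreover have "?f2 ` ?P \<subseteq> F X"
    proof
      fix t assume "t \<in> ?f2 ` ?P"
      then obtain b c where "t = (b,x,c)" "(b,c) \<in> ?P" by (rule img_case)
      moreover hence "adj b x" using adj_sym unfolding Pn_def by blast
      ultimately show "t \<in> F X" using assms(2) unfolding F_def Pn_def by blast
    qed
    moreover have "?f3 ` ?P \<subseteq> F X"
    proof
      fix t assume "t \<in> ?f3 ` ?P"
      then obtain b c where "t = (b,c,x)" "(b,c) \<in> ?P" by (rule img_case)
      moreover hence "adj b x" "adj c x" using adj_sym unfolding Pn_def by blast+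
      ultimately show "t \<in> F X" using assms(2) unfolding F_def Pn_def by blast
    qed
    ultimately show "F ?X \<union> (?f1 ` ?P \<union> (?f2 ` ?P \<union> ?f3 ` ?P)) \<subseteq> F X" by blast
  qed
  have fP: "finite ?P" using fin_Pn assms(1) by blast
  have xP: "\<And>b c. (b,c) \<in> ?P \<Longrightarrow> b \<noteq> x \<and> c \<noteq> x" unfolding Pn_def by blast
  have d1: "F ?X \<inter> (?f1 ` ?P \<union> (?f2 ` ?P \<union> ?f3 ` ?P)) = {}"
  proof -
    { fix t assume a1: "t \<in> F ?X" and "t \<in> ?f1 ` ?P \<union> (?f2 ` ?P \<union> ?f3 ` ?P)"
      then consider "t \<in> ?f1 ` ?P" | "t \<in> ?f2 ` ?P" | "t \<in> ?f3 ` ?P" by blast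
      moreover obtain a b c where abc: "t = (a,b,c)" "a \<noteq> x" "b \<noteq> x" "c \<noteq> x"
        using a1 unfolding F_def by blast
      ultimately have False
      proof cases
        case 1 then obtain b' c' where "t = (x,b',c')" by (rule img_case)
        thus False using abc by simp
      next
        case 2 then obtain b' c' where "t = (b',x,c')" by (rule img_case)
        thus False using abc by simp
      next
        case 3 then obtain b' c' where "t = (b',c',x)" by (rule img_case)
        thus False using abc by simp
      qed }
    thus ?thesis by blast
  qed
  have d2: "?f1 ` ?P \<inter> (?f2 ` ?P \<union> ?f3 ` ?P) = {}"
  proof -
    { fix t assume a1: "t \<in> ?f1 ` ?P" and "t \<in> ?f2 ` ?P \<union> ?f3 ` ?P"
      then consider "t \<in> ?f2 ` ?P" | "t \<in> ?f3 ` ?P" by blast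
      hence False
      proof cases
        case 1
        obtain b c where "t = (x,b,c)" "(b,c) \<in> ?P" using a1 by (rule img_case)
        moreover obtain b' c' where "t = (b',x,c')" "(b',c') \<in> ?P" using 1 by (rule img_case)
        ultimately show False using xP by blast
      next
        case 2
        obtain b c where "t = (x,b,c)" "(b,c) \<in> ?P" using a1 by (rule img_case)
        moreover obtain b' c' where "t = (b',c',x)" "(b',c') \<in> ?P" using 2 by (rule img_case)
        ultimately show False using xP by blast
      qed }
    thus ?thesis by blast
  qed
  have d3: "?f2 ` ?P \<inter> ?f3 ` ?P = {}"
  proof -
    { fix t assume a1: "t \<in> ?f2 ` ?P" and a2: "t \<in> ?f3 ` ?P"
      obtain b c where "t = (b,x,c)" "(b,c) \<in> ?P" using a1 by (rule img_case)
      moreover obtain b' c' where "t = (b',c',x)" "(b',c') \<in> ?P" using a2 by (rule img_case)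
      ultimately have False using xP by blast }
    thus ?thesis by blast
  qed
  have i1: "inj_on ?f1 ?P" "inj_on ?f2 ?P" "inj_on ?f3 ?P" by (auto simp: inj_on_def)
  have "card (F X) = card (F ?X) + (card (?f1 ` ?P) + (card (?f2 ` ?P) + card (?f3 ` ?P)))"
    unfolding eq
    by (subst card_Un_disjoint, use fin_F assms(1) fP d1 in auto,
        subst card_Un_disjoint, use fP d2 in auto, subst card_Un_disjoint, use fP d3 in auto)
  also have "\<dots> = card (F ?X) + 3 * card ?P" using i1 by (simp add: card_image)
  finally show ?thesis using Pn_card[OF assms(3)] by simp
qed

lemma chi6_remove: assumes "finite X" "x \<in> X" "tri_node x"
  shows "chi6 X = chi6 (X - {x}) + 6 - 6 * int (ri (X - {x}) x)"
proof -
  have c: "card X = card (X - {x}) + 1" using assms(1,2)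
    by (metis card_Suc_Diff1 Suc_eq_plus1)
  show ?thesis unfolding chi6_def E_remove[OF assms] F_remove[OF assms] c
    using m_eq[of "X - {x}" x] by simp
qed



lemma walk_mod: "Suc ((i0 + k) mod 6) mod 6 = (i0 + Suc k) mod (6::nat)"
  by (simp add: mod_Suc_eq)

lemma r_pos: assumes "1 \<le> mi X A" "mi X A \<le> 5" shows "1 \<le> ri X A"
proof (rule ccontr)
  assume "\<not> 1 \<le> ri X A"
  hence "ri X A = 0" by simp
  hence R: "Ri X A = {}" using fin_Ri[of X A] by simp
  have "Mi X A \<noteq> {}" using assms(1) by (metis card.empty not_one_le_zero)
  then obtain i0 where i0: "i0 < 6" "nb A i0 \<in> X" unfolding Mi_def by blast
  have step: "\<And>i. i < 6 \<Longrightarrow> nb A i \<in> X \<Longrightarrow> nb A (Suc i mod 6) \<in> X"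
    using R unfolding Ri_def by blast
  have all: "\<And>k. nb A ((i0 + k) mod 6) \<in> X"
  proof -
    fix k show "nb A ((i0 + k) mod 6) \<in> X"
    proof (induction k)
      case 0 thus ?case using i0 by simp
    next
      case (Suc k)
      have "nb A (Suc ((i0 + k) mod 6) mod 6) \<in> X" by (rule step) (simp_all add: Suc)
      thus ?case by (simp add: walk_mod)
    qed
  qed
  have "Mi X A = {..<6}"
  proof
    show "Mi X A \<subseteq> {..<6}" unfolding Mi_def by blast
    show "{..<6} \<subseteq> Mi X A"
    proof
      fix i :: nat assume "i \<in> {..<6}"
      hence "i = (i0 + (6 + i - i0)) mod 6" using i0 by simp
      hence "nb A i \<in> X" using all by metis
      thus "i \<in> Mi X A" using \<open>i \<in> {..<6}\<close> unfolding Mi_def by blast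
    qed
  qed
  thus False using assms(2) by simp
qed

lemma ex_erodible:
  assumes "finite X" "tris X" "chi6 X > 0" "\<forall>a\<in>X. 1 \<le> mi X a"
  shows "\<exists>a\<in>X. ri X a = 1 \<and> mi X a \<le> 3"
proof (rule ccontr)
  assume H: "\<not> ?thesis"
  have "\<forall>a\<in>X. 6 - int (mi X a) - 2 * int (ri X a) \<le> 0"
  proof
    fix a assume a: "a \<in> X"
    have m1: "1 \<le> mi X a" using assms(4) a by blast
    have m6: "mi X a \<le> 6" by (rule Mi_le6)
    have rm: "ri X a \<le> mi X a" by (rule Ri_le_Mi)
    show "6 - int (mi X a) - 2 * int (ri X a) \<le> 0"
    proof (cases "ri X a = 0")
      case True
      hence "\<not> mi X a \<le> 5" using r_pos[of X a] m1 by linarith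
      thus ?thesis using True by simp
    next
      case False
      show ?thesis
      proof (cases "ri X a = 1")
        case True
        hence "\<not> mi X a \<le> 3" using H a by blast
        thus ?thesis using True by simp
      next
        case False
        thus ?thesis using \<open>ri X a \<noteq> 0\<close> rm by linarith
      qed
    qed
  qed
  hence "(\<Sum>a\<in>X. 6 - int (mi X a) - 2 * int (ri X a)) \<le> 0" by (intro sum_nonpos) blast
  thus False using chi6_sum[OF assms(1,2)] assms(3) by simp
qed

lemma E_sym: "(a,b) \<in> E X \<Longrightarrow> (b,a) \<in> E X"
  unfolding E_def using adj_sym by blast

lemma E_rtrancl_sym: "(a,b) \<in> (E X)\<^sup>* \<Longrightarrow> (b,a) \<in> (E X)\<^sup>*"
proof (induction rule: rtrancl_induct)
  case base thus ?case by simp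
next
  case (step b c)
  have "(c,b) \<in> E X" using step(2) by (rule E_sym)
  thus ?case using step(3) by (rule converse_rtrancl_into_rtrancl)
qed

lemma induced_connected_E: "induced_connected K \<longleftrightarrow> (\<forall>u\<in>K. \<forall>v\<in>K. (u,v) \<in> (E K)\<^sup>*)"
  unfolding induced_connected_def E_def by simp

lemma arc_connected:
  assumes "tri_node A" "ri X A = 1"
  shows "induced_connected (Nn X A)"
proof -
  obtain i0 where R: "Ri X A = {i0}" using assms(2) card_1_singletonE by blast
  hence i0: "i0 < 6" "nb A i0 \<in> X" unfolding Ri_def by blast+
  let ?K = "Nn X A"
  have inK: "\<And>j. j < 6 \<Longrightarrow> nb A j \<in> X \<Longrightarrow> nb A j \<in> ?K"
  proof -
    fix j assume "j < (6::nat)" "nb A j \<in> X"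
    moreover have "adj A (nb A j)" using adj_iff_nb[OF assms(1), of "nb A j"] \<open>j<6\<close> by blast
    ultimately show "nb A j \<in> ?K" unfolding Nn_def by blast
  qed
  have main: "\<And>k. \<forall>j. j < 6 \<longrightarrow> nb A j \<in> X \<longrightarrow> (j + k) mod 6 = i0 \<longrightarrow> (nb A j, nb A i0) \<in> (E ?K)\<^sup>*"
  proof -
    fix k show "\<forall>j. j < 6 \<longrightarrow> nb A j \<in> X \<longrightarrow> (j + k) mod 6 = i0 \<longrightarrow> (nb A j, nb A i0) \<in> (E ?K)\<^sup>*"
    proof (induction k)
      case 0
      thus ?case by simp
    next
      case (Suc k)
      show ?case
      proof (intro allI impI)
        fix j assume j: "j < 6" "nb A j \<in> X" "(j + Suc k) mod 6 = i0"
        show "(nb A j, nb A i0) \<in> (E ?K)\<^sup>*"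
        proof (cases "j = i0")
          case True thus ?thesis by simp
        next
          case False
          hence "j \<notin> Ri X A" using R by blast
          hence n: "nb A (Suc j mod 6) \<in> X" using j unfolding Ri_def by blast
          have k: "(Suc j mod 6 + k) mod 6 = i0" using j(3) by (simp add: mod_add_left_eq)
          have "(nb A (Suc j mod 6), nb A i0) \<in> (E ?K)\<^sup>*" using Suc.IH n k by simp
          moreover have "(nb A j, nb A (Suc j mod 6)) \<in> E ?K"
            using inK[OF j(1,2)] inK[OF _ n] adj_nb_nb[OF assms(1), of j "Suc j mod 6"] j(1)
            unfolding E_def by simp
          ultimately show "(nb A j, nb A i0) \<in> (E ?K)\<^sup>*" by (meson converse_rtrancl_into_rtrancl)
        qed
      qed
    qed
  qed
  have to0: "\<And>u. u \<in> ?K \<Longrightarrow> (u, nb A i0) \<in> (E ?K)\<^sup>*"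
  proof -
    fix u assume u: "u \<in> ?K"
    hence "adj A u" "u \<in> X" unfolding Nn_def by blast+
    then obtain j where "j < 6" "u = nb A j" using adj_iff_nb[OF assms(1), of u] by blast
    hence "j < 6" "u = nb A j" "nb A j \<in> X" using \<open>u \<in> X\<close> by blast+
    moreover have "(j + (i0 + 6 - j)) mod 6 = i0" using \<open>j<6\<close> i0(1) by simp
    ultimately show "(u, nb A i0) \<in> (E ?K)\<^sup>*" using main by blast
  qed
  show ?thesis unfolding induced_connected_E
  proof (intro ballI)
    fix u v assume "u \<in> ?K" "v \<in> ?K"
    thus "(u,v) \<in> (E ?K)\<^sup>*" using to0 E_rtrancl_sym by (meson rtrancl_trans)
  qed
qed

definition reach :: "node set \<Rightarrow> node \<Rightarrow> node set" where
  "reach X a = {b. (a,b) \<in> (E X)\<^sup>*}"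

definition ncomp :: "node set \<Rightarrow> nat" where
  "ncomp X = card (reach X ` X)"

lemma E_mono: "X \<subseteq> Y \<Longrightarrow> E X \<subseteq> E Y" unfolding E_def by blast

lemma reach_self: "a \<in> reach X a" unfolding reach_def by simp

lemma reach_sub: assumes "a \<in> X" shows "reach X a \<subseteq> X"
proof
  fix b assume "b \<in> reach X a"
  hence "(a,b) \<in> (E X)\<^sup>*" unfolding reach_def by simp
  thus "b \<in> X"
  proof (induction rule: rtrancl_induct)
    case base thus ?case using assms .
  next
    case (step b c) thus ?case unfolding E_def by blast
  qed
qed

lemma reach_eq: "b \<in> reach X a \<Longrightarrow> reach X b = reach X a"
proof -
  assume "b \<in> reach X a"
  hence ab: "(a,b) \<in> (E X)\<^sup>*" unfolding reach_def by simp
  hence ba: "(b,a) \<in> (E X)\<^sup>*" by (rule E_rtrancl_sym)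
  show ?thesis unfolding reach_def using ab ba by (meson rtrancl_trans)
qed

lemma reach_meet: "c \<in> reach X a \<Longrightarrow> c \<in> reach X b \<Longrightarrow> reach X a = reach X b"
  using reach_eq by metis

lemma fin_comps: "finite X \<Longrightarrow> finite (reach X ` X)" by simp

lemma comp_connected: assumes "induced_connected X" "X \<noteq> {}" shows "ncomp X = 1"
proof -
  have "\<And>a. a \<in> X \<Longrightarrow> reach X a = X"
  proof
    fix a assume "a \<in> X"
    thus "reach X a \<subseteq> X" by (rule reach_sub)
    show "X \<subseteq> reach X a" using assms(1) \<open>a \<in> X\<close> unfolding induced_connected_E reach_def by blast
  qed
  hence "reach X ` X = {X}" using assms(2) by blast
  thus ?thesis unfolding ncomp_def by simp
qed

lemma walk_arc:
  assumes x: "tri_node x" and i: "i \<in> Mi X x" and m: "mi X x \<le> 5"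
  shows "\<exists>j\<in>Ri X x. nb x j \<in> reach X (nb x i)"
proof -
  have "Mi X x \<noteq> {..<6}"
  proof
    assume "Mi X x = {..<6}"
    hence "mi X x = 6" by simp
    thus False using m by simp
  qed
  moreover have "Mi X x \<subseteq> {..<6}" unfolding Mi_def by blast
  ultimately obtain l where l: "l < 6" "l \<notin> Mi X x" by blast
  hence l': "nb x l \<notin> X" unfolding Mi_def by blast
  have i6: "i < 6" "nb x i \<in> X" using i unfolding Mi_def by blast+
  let ?P = "\<lambda>k. nb x ((i + Suc k) mod 6) \<notin> X"
  have "(i + Suc (l + 5 - i)) mod 6 = l" using i6(1) l(1) by simp
  hence "?P (l + 5 - i)" using l' by simp
  hence P0: "?P (LEAST k. ?P k)" by (rule LeastI)
  define k0 where "k0 = (LEAST k. ?P k)"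
  have notP: "\<And>k. k < k0 \<Longrightarrow> \<not> ?P k" unfolding k0_def by (rule not_less_Least)
  have walk: "\<And>k. k \<le> k0 \<Longrightarrow> nb x ((i + k) mod 6) \<in> X \<and> nb x ((i + k) mod 6) \<in> reach X (nb x i)"
  proof -
    fix k show "k \<le> k0 \<Longrightarrow> nb x ((i + k) mod 6) \<in> X \<and> nb x ((i + k) mod 6) \<in> reach X (nb x i)"
    proof (induction k)
      case 0 thus ?case using i6 reach_self by simp
    next
      case (Suc k)
      hence IH: "nb x ((i + k) mod 6) \<in> X" "nb x ((i + k) mod 6) \<in> reach X (nb x i)" by simp_all
      have n: "nb x ((i + Suc k) mod 6) \<in> X" using notP[of k] Suc.prems by simp
      have "adj (nb x ((i + k) mod 6)) (nb x (Suc ((i + k) mod 6) mod 6))"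
        using adj_nb_nb[OF x, of "(i + k) mod 6" "Suc ((i + k) mod 6) mod 6"] by simp
      hence "adj (nb x ((i + k) mod 6)) (nb x ((i + Suc k) mod 6))" by (simp add: walk_mod)
      hence "(nb x ((i + k) mod 6), nb x ((i + Suc k) mod 6)) \<in> E X"
        using IH(1) n unfolding E_def by blast
      moreover have "(nb x i, nb x ((i + k) mod 6)) \<in> (E X)\<^sup>*" using IH(2) unfolding reach_def by simp
      ultimately have "(nb x i, nb x ((i + Suc k) mod 6)) \<in> (E X)\<^sup>*" by simp
      hence "nb x ((i + Suc k) mod 6) \<in> reach X (nb x i)" unfolding reach_def by simp
      thus ?case using n by simp
    qed
  qed
  let ?j = "(i + k0) mod 6"
  have "?j \<in> Ri X x"
  proof -
    have "nb x (Suc ?j mod 6) \<notin> X" using P0 unfolding k0_def[symmetric] by (simp add: walk_mod)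
    thus ?thesis using walk[of k0] unfolding Ri_def by simp
  qed
  thus ?thesis using walk[of k0] by blast
qed

lemma reach_avoid:
  assumes x: "tri_node x" and a: "a \<in> X - {x}"
    and no: "\<not> (\<exists>i\<in>Mi (X - {x}) x. nb x i \<in> reach (X - {x}) a)"
  shows "reach X a = reach (X - {x}) a \<and> x \<notin> reach X a"
proof -
  let ?X = "X - {x}"
  have "\<And>b. (a,b) \<in> (E X)\<^sup>* \<Longrightarrow> (a,b) \<in> (E ?X)\<^sup>* \<and> b \<noteq> x"
  proof -
    fix b assume "(a,b) \<in> (E X)\<^sup>*"
    thus "(a,b) \<in> (E ?X)\<^sup>* \<and> b \<noteq> x"
    proof (induction rule: rtrancl_induct)
      case base thus ?case using a by simp
    next
      case (step b c)
      have bc: "b \<in> X" "c \<in> X" "adj b c" using step(2) unfolding E_def by blast+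
      have cx: "c \<noteq> x"
      proof
        assume "c = x"
        hence "adj x b" using bc adj_sym by blast
        then obtain i where "i < 6" "b = nb x i" using adj_iff_nb[OF x, of b] by blast
        moreover have "b \<in> ?X" using bc step(3) by blast
        ultimately have "i \<in> Mi ?X x" "nb x i \<in> reach ?X a"
          using step(3) unfolding Mi_def reach_def by blast+
        thus False using no by blast
      qed
      hence "(b,c) \<in> E ?X" using bc step(3) unfolding E_def by blast
      thus ?case using step(3) cx by (meson rtrancl.rtrancl_into_rtrancl)
    qed
  qed
  moreover have "(E ?X)\<^sup>* \<subseteq> (E X)\<^sup>*" by (rule rtrancl_mono, rule E_mono) blast
  ultimately show ?thesis unfolding reach_def by blast
qed

lemma comp_remove:
  assumes fin: "finite X" and t: "tris X" and xX: "x \<in> X" and m: "mi X x \<le> 5"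
  shows "ncomp (X - {x}) + 1 \<le> ncomp X + ri (X - {x}) x"
proof -
  let ?X = "X - {x}"
  have x: "tri_node x" using t xX unfolding tris_def by blast
  have m': "mi ?X x \<le> 5" using m Mi_remove[OF x] by simp
  let ?C' = "reach ?X ` ?X" let ?C = "reach X ` X"
  define g where "g Q = (if (\<exists>i\<in>Mi ?X x. nb x i \<in> Q) then Inr (SOME j. j \<in> Ri ?X x \<and> nb x j \<in> Q)
      else Inl (reach X (SOME a. a \<in> Q)))" for Q
  have rng: "g ` ?C' \<subseteq> (?C - {reach X x}) <+> Ri ?X x"
  proof
    fix y assume "y \<in> g ` ?C'"
    then obtain a where a: "a \<in> ?X" "y = g (reach ?X a)" by blast
    show "y \<in> (?C - {reach X x}) <+> Ri ?X x"
    proof (cases "\<exists>i\<in>Mi ?X x. nb x i \<in> reach ?X a")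
      case True
      then obtain i where i: "i \<in> Mi ?X x" "nb x i \<in> reach ?X a" by blast
      obtain j where j: "j \<in> Ri ?X x" "nb x j \<in> reach ?X (nb x i)" using walk_arc[OF x i(1) m'] by blast
      have "reach ?X (nb x i) = reach ?X a" using i(2) by (rule reach_eq)
      hence "\<exists>j. j \<in> Ri ?X x \<and> nb x j \<in> reach ?X a" using j by auto
      hence "(SOME j. j \<in> Ri ?X x \<and> nb x j \<in> reach ?X a) \<in> Ri ?X x" by (metis (mono_tags, lifting) someI_ex)
      hence "Inr (SOME j. j \<in> Ri ?X x \<and> nb x j \<in> reach ?X a) \<in> (?C - {reach X x}) <+> Ri ?X x"
        by (rule InrI)
      thus ?thesis using a(2) True unfolding g_def by simp
    next
      case False
      have ne: "\<exists>b. b \<in> reach ?X a" using reach_self by blast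
      define b where "b = (SOME b. b \<in> reach ?X a)"
      have b: "b \<in> reach ?X a" unfolding b_def using ne by (rule someI_ex)
      have rb: "reach ?X b = reach ?X a" using b by (rule reach_eq)
      have bX: "b \<in> ?X" using reach_sub[OF a(1)] b by blast
      have "\<not> (\<exists>i\<in>Mi ?X x. nb x i \<in> reach ?X b)" using False rb by simp
      from reach_avoid[OF x bX this] have "reach X b = reach ?X b \<and> x \<notin> reach X b" .
      hence "reach X b \<noteq> reach X x" using reach_self[of x X] by blast
      moreover have "reach X b \<in> ?C" using bX by blast
      ultimately have "reach X b \<in> ?C - {reach X x}" by blast
      hence "Inl (reach X b) \<in> (?C - {reach X x}) <+> Ri ?X x" by (rule InlI)
      thus ?thesis using a(2) False unfolding g_def b_def by simp
    qed
  qed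
  have inj: "inj_on g ?C'"
  proof
    fix Q1 Q2 assume Q1: "Q1 \<in> ?C'" and Q2: "Q2 \<in> ?C'" and e: "g Q1 = g Q2"
    obtain a1 where a1: "a1 \<in> ?X" "Q1 = reach ?X a1" using Q1 by blast
    obtain a2 where a2: "a2 \<in> ?X" "Q2 = reach ?X a2" using Q2 by blast
    show "Q1 = Q2"
    proof (cases "\<exists>i\<in>Mi ?X x. nb x i \<in> Q1")
      case T1: True
      have "\<exists>i\<in>Mi ?X x. nb x i \<in> Q2"
      proof (rule ccontr)
        assume "\<not> (\<exists>i\<in>Mi ?X x. nb x i \<in> Q2)"
        thus False using e T1 unfolding g_def by simp
      qed
      { fix Q a assume a: "Q = reach ?X a" and h: "\<exists>i\<in>Mi ?X x. nb x i \<in> Q"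
        then obtain i where i: "i \<in> Mi ?X x" "nb x i \<in> Q" by blast
        obtain j where j: "j \<in> Ri ?X x" "nb x j \<in> reach ?X (nb x i)" using walk_arc[OF x i(1) m'] by blast
        have "reach ?X (nb x i) = Q" using i(2) a by (simp add: reach_eq)
        hence "\<exists>j. j \<in> Ri ?X x \<and> nb x j \<in> Q" using j by auto
        hence "nb x (SOME j. j \<in> Ri ?X x \<and> nb x j \<in> Q) \<in> Q" by (metis (mono_tags, lifting) someI_ex) }
      note sm = this
      have s1: "nb x (SOME j. j \<in> Ri ?X x \<and> nb x j \<in> Q1) \<in> Q1" using sm[OF a1(2) T1] .
      have s2: "nb x (SOME j. j \<in> Ri ?X x \<and> nb x j \<in> Q2) \<in> Q2" using sm[OF a2(2) \<open>\<exists>i\<in>Mi ?X x. nb x i \<in> Q2\<close>] .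
      have "(SOME j. j \<in> Ri ?X x \<and> nb x j \<in> Q1) = (SOME j. j \<in> Ri ?X x \<and> nb x j \<in> Q2)"
        using e T1 \<open>\<exists>i\<in>Mi ?X x. nb x i \<in> Q2\<close> unfolding g_def by simp
      hence "nb x (SOME j. j \<in> Ri ?X x \<and> nb x j \<in> Q1) \<in> Q2" using s2 by simp
      thus ?thesis using s1 a1(2) a2(2) reach_meet by metis
    next
      case F1: False
      have F2: "\<not> (\<exists>i\<in>Mi ?X x. nb x i \<in> Q2)"
      proof
        assume "\<exists>i\<in>Mi ?X x. nb x i \<in> Q2"
        thus False using e F1 unfolding g_def by simp
      qed
      { fix Q a assume a: "a \<in> ?X" "Q = reach ?X a" and h: "\<not> (\<exists>i\<in>Mi ?X x. nb x i \<in> Q)"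
        define b where "b = (SOME b. b \<in> Q)"
        have b: "b \<in> Q" unfolding b_def using reach_self a(2) by (metis someI_ex)
        have rb: "reach ?X b = Q" using b a(2) by (simp add: reach_eq)
        have bX: "b \<in> ?X" using reach_sub[OF a(1)] b a(2) by blast
        have "\<not> (\<exists>i\<in>Mi ?X x. nb x i \<in> reach ?X b)" using h rb by simp
        from reach_avoid[OF x bX this] have "reach X b = Q" using rb by simp
        hence "reach X (SOME b. b \<in> Q) = Q" unfolding b_def . }
      note sm = this
      have "reach X (SOME b. b \<in> Q1) = reach X (SOME b. b \<in> Q2)" using e F1 F2 unfolding g_def by simp
      thus ?thesis using sm[OF a1 F1] sm[OF a2 F2] by simp
    qed
  qed
  have fC: "finite ?C" using fin by simp
  have "card ?C' \<le> card ((?C - {reach X x}) <+> Ri ?X x)"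
    using card_inj_on_le[OF inj rng] fC fin_Ri by simp
  also have "\<dots> = card (?C - {reach X x}) + ri ?X x" using fC fin_Ri by (simp add: card_Plus)
  also have "card (?C - {reach X x}) = card ?C - 1" using xX fC by simp
  finally have "card ?C' \<le> card ?C - 1 + ri ?X x" .
  moreover have "card ?C \<ge> 1" using xX fC by (metis card_0_eq empty_iff imageI less_one not_le)
  ultimately show ?thesis unfolding ncomp_def by linarith
qed

definition D6 :: "node set \<Rightarrow> int" where "D6 X = chi6 X - 6 * int (ncomp X)"

lemma D6_remove:
  assumes fin: "finite X" and t: "tris X" and xX: "x \<in> X" and m: "mi X x \<le> 5"
  shows "D6 X \<le> D6 (X - {x})"
proof -
  have x: "tri_node x" using t xX unfolding tris_def by blast
  have c: "ncomp (X - {x}) + 1 \<le> ncomp X + ri (X - {x}) x" by (rule comp_remove[OF assms])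
  have e: "chi6 X = chi6 (X - {x}) + 6 - 6 * int (ri (X - {x}) x)" by (rule chi6_remove[OF fin xX x])
  show ?thesis unfolding D6_def using c e by linarith
qed



definition box :: "int \<Rightarrow> int \<Rightarrow> node set" where
  "box lo hi = {(x,y,-x-y) | x y. lo \<le> x \<and> x \<le> hi \<and> lo \<le> y \<and> y \<le> hi}"

definition kap :: "int \<Rightarrow> node \<Rightarrow> int" where
  "kap W p = (case p of (x,y,z) \<Rightarrow> x*W + y)"

lemma box_fin: "finite (box lo hi)"
proof -
  have "box lo hi = (\<lambda>(x,y). (x,y,-x-y)) ` ({lo..hi} \<times> {lo..hi})" unfolding box_def by auto
  thus ?thesis by simp
qed

lemma box_tris: "tris (box lo hi)"
  unfolding tris_def box_def using tri_node_iff by auto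

lemma kap_inj:
  fixes lo hi y1 y2 x1 x2 W :: int
  assumes "lo \<le> y1" "y1 \<le> hi" "lo \<le> y2" "y2 \<le> hi" "W = hi - lo + 1"
    and "x1*W + y1 = x2*W + y2"
  shows "x1 = x2 \<and> y1 = y2"
proof -
  have W: "W > 0" using assms by simp
  have "x1 = x2"
  proof (rule ccontr)
    assume "x1 \<noteq> x2"
    then consider "x1 < x2" | "x2 < x1" by linarith
    thus False
    proof cases
      case 1
      hence "1 * W \<le> (x2 - x1) * W" using W by (intro mult_right_mono) simp_all
      moreover have "y1 - y2 = (x2 - x1) * W" using assms(6) by (simp add: algebra_simps)
      ultimately show False using assms(1-5) by linarith
    next
      case 2
      hence "1 * W \<le> (x1 - x2) * W" using W by (intro mult_right_mono) simp_all
      moreover have "y2 - y1 = (x1 - x2) * W" using assms(6) by (simp add: algebra_simps)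
      ultimately show False using assms(1-5) by linarith
    qed
  qed
  thus ?thesis using assms by simp
qed

lemma kap_less_lo:
  fixes lo a b W :: int
  assumes "lo \<le> a" "lo \<le> b" "W > 0" "a*W + b < lo*W + lo"
  shows False
proof -
  have "lo * W \<le> a * W" using assms by (intro mult_right_mono) simp_all
  thus False using assms(2,4) by linarith
qed

lemma single_chi: "chi6 {p} = 6"
proof -
  have "E {p} = {}" unfolding E_def using adj_irrefl by blast
  moreover have "F {p} = {}" unfolding F_def using adj_irrefl by blast
  ultimately show ?thesis unfolding chi6_def by simp
qed

lemma single_conn: "induced_connected {p}"
  unfolding induced_connected_def by simp

lemma conn_insert:
  assumes "induced_connected X" "q \<in> X" "adj p q"
  shows "induced_connected (insert p X)"
proof -
  let ?Y = "insert p X"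
  have sub: "(E X)\<^sup>* \<subseteq> (E ?Y)\<^sup>*" by (rule rtrancl_mono, rule E_mono) blast
  have pq: "(p,q) \<in> E ?Y" "(q,p) \<in> E ?Y" using assms adj_sym unfolding E_def by blast+
  have "\<And>u. u \<in> X \<Longrightarrow> (u,p) \<in> (E ?Y)\<^sup>* \<and> (p,u) \<in> (E ?Y)\<^sup>*"
  proof -
    fix u assume "u \<in> X"
    hence "(u,q) \<in> (E ?Y)\<^sup>*" "(q,u) \<in> (E ?Y)\<^sup>*" using assms(1,2) sub unfolding induced_connected_E by blast+
    thus "(u,p) \<in> (E ?Y)\<^sup>* \<and> (p,u) \<in> (E ?Y)\<^sup>*" using pq by (meson converse_rtrancl_into_rtrancl rtrancl_into_rtrancl)
  qed
  thus ?thesis unfolding induced_connected_E using sub assms(1) unfolding induced_connected_E by blast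
qed

definition dclosed :: "int \<Rightarrow> int \<Rightarrow> node set \<Rightarrow> bool" where
  "dclosed lo hi X \<longleftrightarrow> X \<subseteq> box lo hi \<and>
     (\<forall>q\<in>box lo hi. \<forall>p\<in>X. kap (hi - lo + 1) q \<le> kap (hi - lo + 1) p \<longrightarrow> q \<in> X)"

lemma nb_box_coord: "nb (x,y,-x-y) i = (x + fst (dir i), y + fst (snd (dir i)),
    -(x + fst (dir i)) - (y + fst (snd (dir i))))"
  unfolding nb_coord using dir_sum'[of i] by (simp add: algebra_simps)

lemma dclosed_chi:
  "\<And>X. dclosed lo hi X \<Longrightarrow> X \<noteq> {} \<Longrightarrow> chi6 X = 6 \<and> induced_connected X"
proof -
  fix X
  show "dclosed lo hi X \<Longrightarrow> X \<noteq> {} \<Longrightarrow> chi6 X = 6 \<and> induced_connected X"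
  proof (induction "card X" arbitrary: X rule: less_induct)
    case less
    let ?W = "hi - lo + 1"
    let ?k = "kap ?W"
    have XB: "X \<subseteq> box lo hi" using less.prems unfolding dclosed_def by blast
    have finX: "finite X" using XB box_fin finite_subset by blast
    obtain p where pX: "p \<in> X" and pmax: "\<forall>q\<in>X. ?k q \<le> ?k p"
    proof -
      have "Max (?k ` X) \<in> ?k ` X" using finX less.prems(2) by simp
      then obtain p where "p \<in> X" "?k p = Max (?k ` X)" by auto
      moreover have "\<forall>q\<in>X. ?k q \<le> Max (?k ` X)" using finX by simp
      ultimately show ?thesis using that by metis
    qed
    obtain x y where p: "p = (x,y,-x-y)" "lo \<le> x" "x \<le> hi" "lo \<le> y" "y \<le> hi"
      using pX XB unfolding box_def by blast
    have kinj: "\<And>q r. q \<in> box lo hi \<Longrightarrow> r \<in> box lo hi \<Longrightarrow> ?k q = ?k r \<Longrightarrow> q = r"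
    proof -
      fix q r assume "q \<in> box lo hi" "r \<in> box lo hi" "?k q = ?k r"
      then obtain a b c d where "q = (a,b,-a-b)" "r = (c,d,-c-d)" "lo \<le> b" "b \<le> hi" "lo \<le> d" "d \<le> hi"
        "a * ?W + b = c * ?W + d"
        unfolding box_def kap_def by auto
      thus "q = r" using kap_inj[of lo b hi d ?W a c] by simp
    qed
    let ?X = "X - {p}"
    show ?case
    proof (cases "?X = {}")
      case True
      hence "X = {p}" using pX by blast
      thus ?thesis using single_chi single_conn by simp
    next
      case False
      have dc: "dclosed lo hi ?X"
        unfolding dclosed_def
      proof (intro conjI ballI impI)
        show "?X \<subseteq> box lo hi" using XB by blast
        fix q r assume q: "q \<in> box lo hi" and r: "r \<in> ?X" and le: "?k q \<le> ?k r"
        have "q \<in> X" using less.prems(1) q r le unfolding dclosed_def by blast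
        moreover have "?k r < ?k p" using pmax r kinj XB pX by (metis DiffE insertI1 le_less subsetD)
        ultimately show "q \<in> ?X" using le by auto
      qed
      have card: "card ?X < card X" using finX pX by (meson card_Diff1_less)
      have IH: "chi6 ?X = 6" "induced_connected ?X" using less.hyps[OF card dc False] by blast+
      have W: "?W > 0" using p by simp
      have kapnb: "\<And>i. ?k (nb p i) = ?k p + fst (dir i) * ?W + fst (snd (dir i))"
        unfolding p(1) nb_box_coord kap_def by (simp add: algebra_simps)
      define inn where "inn i \<longleftrightarrow> (i = 3 \<and> lo < x \<and> y < hi) \<or> (i = 4 \<and> lo < x) \<or> (i = (5::nat) \<and> lo < y)" for i
      have memb: "\<And>i. i < 6 \<Longrightarrow> nb p i \<in> ?X \<longleftrightarrow> inn i"
      proof -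
        fix i :: nat assume i6: "i < 6"
        have inbox: "nb p i \<in> box lo hi \<longleftrightarrow> lo \<le> x + fst (dir i) \<and> x + fst (dir i) \<le> hi \<and>
            lo \<le> y + fst (snd (dir i)) \<and> y + fst (snd (dir i)) \<le> hi"
          unfolding p(1) nb_box_coord box_def by auto
        show "nb p i \<in> ?X \<longleftrightarrow> inn i"
        proof
          assume h: "nb p i \<in> ?X"
          hence "?k (nb p i) < ?k p" using pmax kinj XB pX by (metis DiffE insertI1 le_less subsetD)
          hence neg: "fst (dir i) * ?W + fst (snd (dir i)) < 0" using kapnb by simp
          have "nb p i \<in> box lo hi" using h XB by blast
          hence bx: "lo \<le> x + fst (dir i) \<and> x + fst (dir i) \<le> hi \<and>
            lo \<le> y + fst (snd (dir i)) \<and> y + fst (snd (dir i)) \<le> hi" unfolding inbox .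
          show "inn i" unfolding inn_def
            by (insert neg bx p W, rule less6_cases[OF i6]; simp add: dir_simps dir_Suc0)
        next
          assume h: "inn i"
          have h': "(i = 3 \<and> lo < x \<and> y < hi) \<or> (i = 4 \<and> lo < x) \<or> (i = (5::nat) \<and> lo < y)"
            using h unfolding inn_def .
          have nbb: "nb p i \<in> box lo hi" unfolding inbox
            by (insert h' p, rule less6_cases[OF i6]; simp add: dir_simps dir_Suc0)
          have neg: "fst (dir i) * ?W + fst (snd (dir i)) < 0"
            by (insert h' W p, rule less6_cases[OF i6]; simp add: dir_simps dir_Suc0; linarith)
          hence "?k (nb p i) \<le> ?k p" using kapnb by simp
          hence "nb p i \<in> X" using less.prems(1) nbb pX unfolding dclosed_def by blast
          moreover have "nb p i \<noteq> p"
          proof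
            assume "nb p i = p"
            hence "?k (nb p i) = ?k p" by simp
            thus False using neg kapnb[of i] by linarith
          qed
          ultimately show "nb p i \<in> ?X" by blast
        qed
      qed
      have notlo: "lo < x \<or> lo < y"
      proof (rule ccontr)
        assume "\<not> (lo < x \<or> lo < y)"
        hence xy: "x = lo" "y = lo" using p by auto
        obtain q where "q \<in> ?X" using False by blast
        hence q: "q \<in> box lo hi" "?k q < ?k p" using pmax kinj XB pX by (metis DiffE insertI1 le_less subsetD)+
        then obtain a b where "q = (a,b,-a-b)" "lo \<le> a" "lo \<le> b" unfolding box_def by blast
        thus False using q(2) xy p(1) W kap_less_lo[of lo a b ?W] unfolding kap_def by simp
      qed
      have Ri: "Ri ?X p = (if lo < y then {5} else {4})"
      proof -
        have "Ri ?X p = {i. i < 6 \<and> inn i \<and> \<not> inn (Suc i mod 6)}"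
          unfolding Ri_def using memb suc6 by blast
        also have "\<dots> = (if lo < y then {5} else {4})"
        proof (intro set_eqI iffI)
          fix i assume "i \<in> {i. i < 6 \<and> inn i \<and> \<not> inn (Suc i mod 6)}"
          hence i: "i < 6" "inn i" "\<not> inn (Suc i mod 6)" by blast+
          have i': "(i = 3 \<and> lo < x \<and> y < hi) \<or> (i = 4 \<and> lo < x) \<or> (i = (5::nat) \<and> lo < y)"
            "\<not> ((Suc i mod 6 = 3 \<and> lo < x \<and> y < hi) \<or> (Suc i mod 6 = 4 \<and> lo < x) \<or> (Suc i mod 6 = (5::nat) \<and> lo < y))"
            using i(2,3) unfolding inn_def by blast+
          show "i \<in> (if lo < y then {5} else {4})"
            by (insert i' notlo, rule less6_cases[OF i(1)]; simp)
        next
          fix i assume "i \<in> (if lo < y then {5::nat} else {4})"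
          thus "i \<in> {i. i < 6 \<and> inn i \<and> \<not> inn (Suc i mod 6)}"
            using notlo unfolding inn_def by (cases "lo < y") auto
        qed
        finally show ?thesis .
      qed
      hence r1: "ri ?X p = 1" by simp
      have tp: "tri_node p" using p(1) tri_node_iff by simp
      have "chi6 X = chi6 ?X + 6 - 6 * int (ri ?X p)" by (rule chi6_remove[OF finX pX tp])
      hence c6: "chi6 X = 6" using IH(1) r1 by simp
      obtain j where "j \<in> Ri ?X p" using Ri by (cases "lo < y") auto
      hence j: "j < 6" "nb p j \<in> ?X" unfolding Ri_def by blast+
      have "adj p (nb p j)" using adj_iff_nb[OF tp, of "nb p j"] j(1) by blast
      hence "induced_connected (insert p ?X)" using conn_insert[OF IH(2) j(2)] by blast
      moreover have "insert p ?X = X" using pX by blast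
      ultimately show ?thesis using c6 by simp
    qed
  qed
qed

lemma box_chi: assumes "lo \<le> hi" shows "chi6 (box lo hi) = 6" "induced_connected (box lo hi)"
proof -
  have "dclosed lo hi (box lo hi)" unfolding dclosed_def by blast
  moreover have "(lo,lo,-lo-lo) \<in> box lo hi" using assms unfolding box_def by blast
  ultimately show "chi6 (box lo hi) = 6" "induced_connected (box lo hi)" using dclosed_chi by blast+
qed



definition Rc :: "node set \<Rightarrow> (node \<times> node) set" where
  "Rc S = {(a,b). tri_node a \<and> tri_node b \<and> a \<notin> S \<and> b \<notin> S \<and> adj a b}"

definition holefree :: "node set \<Rightarrow> bool" where
  "holefree S \<longleftrightarrow> (\<forall>u v. tri_node u \<and> tri_node v \<and> u \<notin> S \<and> v \<notin> S \<longrightarrow> (u,v) \<in> (Rc S)\<^sup>*)"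

lemma exit_step:
  assumes "(u,w) \<in> R\<^sup>*" "u \<in> X" "w \<notin> X"
  shows "\<exists>a b. (a,b) \<in> R \<and> a \<in> X \<and> b \<notin> X"
  using assms
proof (induction rule: rtrancl_induct)
  case base thus ?case by simp
next
  case (step v w)
  show ?case
  proof (cases "v \<in> X")
    case True thus ?thesis using step by blast
  next
    case False thus ?thesis using step by blast
  qed
qed

lemma mi_le5: assumes "tri_node a" "adj a b" "b \<notin> X" shows "mi X a \<le> 5"
proof -
  obtain i where i: "i < 6" "b = nb a i" using adj_iff_nb[OF assms(1), of b] assms(2) by blast
  have "Mi X a \<subseteq> {..<6} - {i}" using i assms(3) unfolding Mi_def by blast
  hence "mi X a \<le> card ({..<6} - {i})" by (intro card_mono) simp_all
  also have "\<dots> = 5" using i by simp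
  finally show ?thesis .
qed

lemma D6_mono:
  assumes hf: "holefree S" and SB: "S \<subseteq> B" and finB: "finite B" and tB: "tris B"
    and w: "tri_node w" "w \<notin> B"
  shows "S \<subseteq> X \<Longrightarrow> X \<subseteq> B \<Longrightarrow> D6 X \<le> D6 S"
proof (induction "card (X - S)" arbitrary: X rule: less_induct)
  case less
  show ?case
  proof (cases "X = S")
    case True thus ?thesis by simp
  next
    case False
    then obtain y0 where y0: "y0 \<in> X" "y0 \<notin> S" using less.prems by blast
    have ty0: "tri_node y0" using tB y0 less.prems unfolding tris_def by blast
    have "(y0,w) \<in> (Rc S)\<^sup>*" using hf ty0 w y0 SB unfolding holefree_def by blast
    moreover have "w \<notin> X" using w less.prems by blast
    ultimately obtain a b where ab: "(a,b) \<in> Rc S" "a \<in> X" "b \<notin> X" using exit_step y0 by metis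
    hence a: "tri_node a" "a \<notin> S" "adj a b" unfolding Rc_def by blast+
    have finX: "finite X" using less.prems finB finite_subset by blast
    have tX: "tris X" using tB less.prems unfolding tris_def by blast
    have "D6 X \<le> D6 (X - {a})" by (rule D6_remove[OF finX tX ab(2) mi_le5[OF a(1,3) ab(3)]])
    moreover have "card (X - {a} - S) < card (X - S)"
    proof -
      have "X - {a} - S = (X - S) - {a}" by blast
      moreover have "a \<in> X - S" using ab a by blast
      moreover have "finite (X - S)" using finX by simp
      ultimately show ?thesis using card_Diff1_less[of "X - S" a] by simp
    qed
    moreover have "S \<subseteq> X - {a}" "X - {a} \<subseteq> B" using less.prems a by blast+
    ultimately show ?thesis using less.hyps by fastforce
  qed
qed

lemma chi6_pos:
  assumes fin: "finite S" and ne: "S \<noteq> {}" and t: "tris S" and c: "induced_connected S"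
    and hf: "holefree S"
  shows "chi6 S \<ge> 6"
proof -
  define N where "N = Max ((\<lambda>(x,y,z). \<bar>x\<bar> + \<bar>y\<bar>) ` S)"
  have bnd: "\<And>x y z. (x,y,z) \<in> S \<Longrightarrow> \<bar>x\<bar> + \<bar>y\<bar> \<le> N"
  proof -
    fix x y z assume "(x,y,z) \<in> S"
    hence "(\<lambda>(x,y,z). \<bar>x\<bar> + \<bar>y\<bar>) (x,y,z) \<in> (\<lambda>(x,y,z). \<bar>x\<bar> + \<bar>y\<bar>) ` S" by (rule imageI)
    hence "(\<lambda>(x,y,z). \<bar>x\<bar> + \<bar>y\<bar>) (x,y,z) \<le> N" unfolding N_def using fin by (intro Max_ge) auto
    thus "\<bar>x\<bar> + \<bar>y\<bar> \<le> N" by simp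
  qed
  have N0: "N \<ge> 0"
  proof -
    obtain x y z where "(x,y,z) \<in> S" using ne by (metis ex_in_conv prod_cases3)
    thus ?thesis using bnd[of x y z] by linarith
  qed
  have SB: "S \<subseteq> box (-N) N"
  proof
    fix p assume "p \<in> S"
    moreover obtain x y z where p: "p = (x,y,z)" by (cases p)
    ultimately have "x + y + z = 0" "\<bar>x\<bar> + \<bar>y\<bar> \<le> N" using t bnd tri_node_iff unfolding tris_def by blast+
    thus "p \<in> box (-N) N" unfolding p box_def by auto
  qed
  let ?w = "(N+1, N+1, -(N+1)-(N+1)) :: node"
  have w: "tri_node ?w" "?w \<notin> box (-N) N" unfolding box_def using tri_node_iff by auto
  have "D6 (box (-N) N) \<le> D6 S"
    by (rule D6_mono[OF hf SB box_fin box_tris w SB]) simp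
  moreover have "D6 (box (-N) N) = 0"
  proof -
    have "box (-N) N \<noteq> {}" using N0 unfolding box_def
      by simp (rule exI[of _ 0], rule exI[of _ 0], simp)
    hence "ncomp (box (-N) N) = 1" using comp_connected box_chi N0 by simp
    thus ?thesis unfolding D6_def using box_chi N0 by simp
  qed
  moreover have "ncomp S = 1" using comp_connected[OF c ne] .
  ultimately show ?thesis unfolding D6_def by simp
qed



definition plane :: "(real \<times> real \<times> real) set" where
  "plane = {v. fst v + fst (snd v) + snd (snd v) = 0}"

lemma dist3: "dist (a::real,b::real,c::real) (a',b',c') = sqrt ((a-a')^2 + (b-b')^2 + (c-c')^2)"
  by (simp add: dist_Pair_Pair dist_real_def)

lemma embed_coord: "Defs.embed (x,y,z) = (real_of_int x, real_of_int y, real_of_int z)"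
  by (simp add: embed_def)

lemma embed_plane: "tri_node p \<Longrightarrow> Defs.embed p \<in> plane"
proof -
  assume "tri_node p"
  moreover obtain x y z where p: "p = (x,y,z)" by (cases p)
  ultimately have "x + y + z = 0" by (simp add: tri_node_iff)
  hence "real_of_int x + real_of_int y + real_of_int z = 0" by (metis of_int_add of_int_0)
  thus ?thesis unfolding p embed_coord plane_def by simp
qed

lemma embed_inj: "Defs.embed p = Defs.embed q \<Longrightarrow> p = q"
  by (cases p; cases q) (simp add: embed_coord)

lemma hex_plane: "hexagon p \<subseteq> plane"
  unfolding hexagon_def plane_def by (auto split: prod.splits)

lemma quad_bound:
  fixes u w :: real
  assumes "0 \<le> u" "u \<le> 1" "0 \<le> w" "w \<le> 1"
  shows "u^2 + w^2 + (u+w)^2 \<le> 1 \<or> (u-1)^2 + w^2 + (u+w-1)^2 \<le> 1 \<or>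
         u^2 + (w-1)^2 + (u+w-1)^2 \<le> 1 \<or> (u-1)^2 + (w-1)^2 + (u+w-2)^2 \<le> 1"
proof -
  have A: "u^2 + w^2 + (u+w)^2 \<le> 1" if "u + w \<le> 2/3" "0 \<le> u" "0 \<le> w" for u w :: real
  proof -
    have "u^2 + w^2 \<le> (u+w)^2" using that by (simp add: power2_sum)
    moreover have "(u+w)^2 \<le> (2/3)^2" using that by (intro power_mono) simp_all
    moreover have "(2/3::real)^2 = 4/9" by (simp add: power2_eq_square)
    ultimately show ?thesis by linarith
  qed
  have B: "(u-1)^2 + w^2 + (u+w-1)^2 \<le> 1" if "2/3 \<le> u + w" "u + w \<le> 1" "w \<le> u" "0 \<le> w" for u w :: real
  proof -
    have "(u-1)^2 \<le> (2/3)^2" using that by (intro power2_le_iff_abs_le[THEN iffD2]) (simp_all add: abs_if)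
    moreover have "w^2 \<le> (1/2)^2" using that by (intro power_mono) simp_all
    moreover have "(u+w-1)^2 \<le> (1/3)^2" using that by (intro power2_le_iff_abs_le[THEN iffD2]) (simp_all add: abs_if)
    ultimately show ?thesis by (simp add: power2_eq_square)
  qed
  show ?thesis
  proof (cases "u + w \<le> 1")
    case True
    show ?thesis
    proof (cases "u + w \<le> 2/3")
      case True thus ?thesis using A assms by blast
    next
      case False
      show ?thesis
      proof (cases "w \<le> u")
        case True thus ?thesis using B[of u w] \<open>u + w \<le> 1\<close> False assms by simp
      next
        case F2: False
        have "(w-1)^2 + u^2 + (w+u-1)^2 \<le> 1" using B[of w u] \<open>u + w \<le> 1\<close> False F2 assms by simp
        thus ?thesis by (simp add: add.commute add.left_commute)
      qed
    qed
  next
    case False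
    let ?u = "1 - u" let ?w = "1 - w"
    have g: "0 \<le> ?u" "0 \<le> ?w" "?u + ?w \<le> 1" using assms False by simp_all
    show ?thesis
    proof (cases "?u + ?w \<le> 2/3")
      case True
      have "?u^2 + ?w^2 + (?u+?w)^2 \<le> 1" using A g True by blast
      moreover have "?u^2 + ?w^2 + (?u+?w)^2 = (u-1)^2 + (w-1)^2 + (u+w-2)^2"
        by (simp add: power2_eq_square algebra_simps)
      ultimately show ?thesis by simp
    next
      case F3: False
      show ?thesis
      proof (cases "?w \<le> ?u")
        case True
        have "(?u-1)^2 + ?w^2 + (?u+?w-1)^2 \<le> 1" using B[of ?u ?w] g F3 True by simp
        moreover have "(?u-1)^2 + ?w^2 + (?u+?w-1)^2 = u^2 + (w-1)^2 + (u+w-1)^2"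
          by (simp add: power2_eq_square algebra_simps)
        ultimately show ?thesis by simp
      next
        case F4: False
        have "(?w-1)^2 + ?u^2 + (?w+?u-1)^2 \<le> 1" using B[of ?w ?u] g F3 F4 by simp
        moreover have "(?w-1)^2 + ?u^2 + (?w+?u-1)^2 = (u-1)^2 + w^2 + (u+w-1)^2"
          by (simp add: power2_eq_square algebra_simps)
        ultimately show ?thesis by simp
      qed
    qed
  qed
qed

lemma near_node: assumes "v \<in> plane" shows "\<exists>q. tri_node q \<and> dist v (Defs.embed q) \<le> 1"
proof -
  obtain a b c where v: "v = (a,b,c)" by (cases v)
  have c: "c = -a-b" using assms unfolding v plane_def by simp
  define x where "x = \<lfloor>a\<rfloor>" define y where "y = \<lfloor>b\<rfloor>"
  define u where "u = a - x" define w where "w = b - y"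
  have uw: "0 \<le> u" "u \<le> 1" "0 \<le> w" "w \<le> 1" unfolding u_def w_def x_def y_def
    by (simp_all add: of_int_floor_le) (linarith+)
  have key: "\<And>i j::int. dist v (Defs.embed (x+i, y+j, -x-y-i-j)) = sqrt ((u-i)^2 + (w-j)^2 + (u+w-i-j)^2)"
  proof -
    fix i j :: int
    have eq: "c - real_of_int (-x-y-i-j) = -(u - i) - (w - j)" unfolding c u_def w_def by simp
    have "(c - real_of_int (-x-y-i-j))^2 = (-(u - i) - (w - j))^2" by (simp only: eq)
    also have "\<dots> = (u+w-i-j)^2" by (simp add: power2_eq_square algebra_simps)
    finally have e3: "(c - real_of_int (-x-y-i-j))^2 = (u+w-i-j)^2" .
    have e1: "a - real_of_int (x+i) = u - i" unfolding u_def by simp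
    have e2: "b - real_of_int (y+j) = w - j" unfolding w_def by simp
    show "dist v (Defs.embed (x+i, y+j, -x-y-i-j)) = sqrt ((u-i)^2 + (w-j)^2 + (u+w-i-j)^2)"
      unfolding v embed_coord dist3 by (simp only: e1 e2 e3)
  qed
  have tri: "\<And>i j. tri_node (x+i, y+j, -x-y-i-j)" using tri_node_iff by simp
  from quad_bound[OF uw] consider
      "u^2 + w^2 + (u+w)^2 \<le> 1" | "(u-1)^2 + w^2 + (u+w-1)^2 \<le> 1"
    | "u^2 + (w-1)^2 + (u+w-1)^2 \<le> 1" | "(u-1)^2 + (w-1)^2 + (u+w-2)^2 \<le> 1" by blast
  thus ?thesis
  proof cases
    case 1 thus ?thesis using key[of 0 0] tri[of 0 0] by (metis add_0_right diff_0_right of_int_0 real_sqrt_le_1_iff)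
  next
    case 2 thus ?thesis using key[of 1 0] tri[of 1 0] by (metis diff_0_right of_int_0 of_int_1 real_sqrt_le_1_iff)
  next
    case 3 thus ?thesis using key[of 0 1] tri[of 0 1] by (metis diff_0_right of_int_0 of_int_1 real_sqrt_le_1_iff)
  next
    case 4
    have "(u-1)^2 + (w-1)^2 + (u+w-1-1)^2 \<le> 1" using 4 by (simp add: algebra_simps)
    thus ?thesis using key[of 1 1] tri[of 1 1] by (metis of_int_1 real_sqrt_le_1_iff)
  qed
qed

lemma coord_close:
  assumes "dist (a::real,b::real,c::real) (a',b',c') \<le> r"
  shows "\<bar>a - a'\<bar> \<le> r" "\<bar>b - b'\<bar> \<le> r" "\<bar>c - c'\<bar> \<le> r"
proof -
  have "dist a a' \<le> r" using dist_fst_le[of "(a,b,c)" "(a',b',c')"] assms by simp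
  thus "\<bar>a - a'\<bar> \<le> r" by (simp add: dist_real_def)
  have "dist (b,c) (b',c') \<le> r" using dist_snd_le[of "(a,b,c)" "(a',b',c')"] assms by simp
  hence "dist b b' \<le> r" "dist c c' \<le> r"
    using dist_fst_le[of "(b,c)" "(b',c')"] dist_snd_le[of "(b,c)" "(b',c')"] by simp_all
  thus "\<bar>b - b'\<bar> \<le> r" "\<bar>c - c'\<bar> \<le> r" by (simp_all add: dist_real_def)
qed

lemma int_near: "\<bar>a - real_of_int x\<bar> \<le> 1 \<Longrightarrow> x \<in> {\<lceil>a - 1\<rceil>..\<lfloor>a + 1\<rfloor>}"
  by (simp add: ceiling_le_iff le_floor_iff abs_le_iff) linarith

lemma fin_near: "finite {q. tri_node q \<and> dist v (Defs.embed q) \<le> 1}"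
proof -
  obtain a b c where v: "v = (a,b,c)" by (cases v)
  let ?B = "{\<lceil>a - 1\<rceil>..\<lfloor>a + 1\<rfloor>} \<times> {\<lceil>b - 1\<rceil>..\<lfloor>b + 1\<rfloor>} \<times> {\<lceil>c - 1\<rceil>..\<lfloor>c + 1\<rfloor>}"
  have "{q. tri_node q \<and> dist v (Defs.embed q) \<le> 1} \<subseteq> ?B"
  proof
    fix q assume q: "q \<in> {q. tri_node q \<and> dist v (Defs.embed q) \<le> 1}"
    obtain x y z where qq: "q = (x,y,z)" by (cases q)
    have "dist (a,b,c) (real_of_int x, real_of_int y, real_of_int z) \<le> 1"
      using q unfolding v qq by (simp add: embed_coord)
    from coord_close[OF this] show "q \<in> ?B" unfolding qq using int_near by simp
  qed
  moreover have "finite ?B" by simp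
  ultimately show ?thesis by (rule finite_subset)
qed

lemma nearest: assumes "v \<in> plane" shows "\<exists>p. tri_node p \<and> v \<in> hexagon p"
proof -
  let ?F = "{q. tri_node q \<and> dist v (Defs.embed q) \<le> 1}"
  obtain q0 where q0: "q0 \<in> ?F" using near_node[OF assms] by blast
  have fF: "finite ?F" by (rule fin_near)
  let ?d = "\<lambda>q. dist v (Defs.embed q)"
  have "?d ` ?F \<noteq> {}" using q0 by blast
  hence "Min (?d ` ?F) \<in> ?d ` ?F" using fF by (intro Min_in) auto
  then obtain p where p: "p \<in> ?F" "?d p = Min (?d ` ?F)" by auto
  have pmin: "\<And>q. tri_node q \<Longrightarrow> ?d p \<le> ?d q"
  proof -
    fix q assume tq: "tri_node q"
    show "?d p \<le> ?d q"
    proof (cases "q \<in> ?F")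
      case True thus ?thesis using p fF by simp
    next
      case False
      hence "?d q > 1" using tq by simp
      moreover have "?d p \<le> 1" using p by simp
      ultimately show ?thesis by simp
    qed
  qed
  have "v \<in> hexagon p"
    unfolding hexagon_def using assms pmin unfolding plane_def by (auto split: prod.splits)
  thus ?thesis using p by blast
qed

lemma hex_near: assumes "v \<in> hexagon p" shows "dist v (Defs.embed p) \<le> 1"
proof -
  have "v \<in> plane" using assms hex_plane by blast
  then obtain q where q: "tri_node q" "dist v (Defs.embed q) \<le> 1" using near_node by blast
  have "dist v (Defs.embed p) \<le> dist v (Defs.embed q)" using assms q(1) unfolding hexagon_def by blast
  thus ?thesis using q by simp
qed

lemma hex_center: assumes "tri_node p" "Defs.embed p \<in> hexagon q" shows "q = p"
proof -
  have "dist (Defs.embed p) (Defs.embed q) \<le> dist (Defs.embed p) (Defs.embed p)" using assms unfolding hexagon_def by blast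
  hence "Defs.embed q = Defs.embed p" by simp
  thus ?thesis by (rule embed_inj)
qed

lemma int_small:
  fixes a b c :: int
  assumes "a + b + c = 0" "a^2 + b^2 + c^2 < 6"
  shows "a^2 + b^2 + c^2 = 0 \<or> a^2 + b^2 + c^2 = 2"
proof -
  have c: "c = -a-b" using assms by simp
  have q: "a^2 + a*b + b^2 < 3" using assms(2) unfolding c by (simp add: power2_eq_square algebra_simps)
  have "\<bar>a\<bar> \<le> 1"
  proof (rule ccontr)
    assume "\<not> \<bar>a\<bar> \<le> 1"
    hence "2 \<le> \<bar>a\<bar>" by simp
    hence "2^2 \<le> \<bar>a\<bar>^2" by (rule power_mono) simp
    hence "4 \<le> a^2" by simp
    moreover have "0 \<le> (2*b + a)^2" by simp
    ultimately show False using q by (simp add: power2_eq_square algebra_simps)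
  qed
  moreover have "\<bar>b\<bar> \<le> 1"
  proof (rule ccontr)
    assume "\<not> \<bar>b\<bar> \<le> 1"
    hence "2 \<le> \<bar>b\<bar>" by simp
    hence "2^2 \<le> \<bar>b\<bar>^2" by (rule power_mono) simp
    hence "4 \<le> b^2" by simp
    moreover have "0 \<le> (2*a + b)^2" by simp
    ultimately show False using q by (simp add: power2_eq_square algebra_simps)
  qed
  ultimately have "a \<in> {-1,0,1}" "b \<in> {-1,0,1}" by auto
  from this q show ?thesis unfolding c by (elim insertE emptyE; simp)
qed

lemma close_adj:
  assumes tp: "tri_node p" and tq: "tri_node q" and d: "dist (Defs.embed p) (Defs.embed q) < sqrt 6"
  shows "p = q \<or> adj p q"
proof -
  obtain x1 y1 z1 where p: "p = (x1,y1,z1)" by (cases p)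
  obtain x2 y2 z2 where q: "q = (x2,y2,z2)" by (cases q)
  have s1: "x1+y1+z1 = 0" "x2+y2+z2 = 0" using tp tq p q tri_node_iff by simp_all
  let ?S = "(x1-x2)^2 + (y1-y2)^2 + (z1-z2)^2"
  have "dist (Defs.embed p) (Defs.embed q) = sqrt (real_of_int ?S)" unfolding p q embed_coord dist3 by simp
  hence "real_of_int ?S < 6" using d by simp
  hence "?S < 6" by linarith
  moreover have "(x1-x2) + (y1-y2) + (z1-z2) = 0" using s1 by simp
  ultimately have "?S = 0 \<or> ?S = 2" using int_small by blast
  thus ?thesis
  proof
    assume "?S = 0"
    hence "(x1-x2)^2 = 0" "(y1-y2)^2 = 0" "(z1-z2)^2 = 0"
      using zero_le_power2[of "x1-x2"] zero_le_power2[of "y1-y2"] zero_le_power2[of "z1-z2"] by linarith+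
    hence "x1 = x2" "y1 = y2" "z1 = z2" by simp_all
    thus ?thesis using p q by simp
  next
    assume "?S = 2"
    thus ?thesis unfolding p q adj_def using tp tq p q by simp
  qed
qed



definition Uu :: "node set \<Rightarrow> (real \<times> real \<times> real) set" where
  "Uu S = (\<Union>p\<in>S. hexagon p)"

definition Pm :: "real \<times> real \<times> real \<Rightarrow> complex" where
  "Pm v = complex_of_real (fst v) + \<i> * complex_of_real (fst (snd v))"

definition Lm :: "complex \<Rightarrow> real \<times> real \<times> real" where
  "Lm z = (Re z, Im z, - Re z - Im z)"

lemma cont_Pm: "continuous_on A Pm"
  unfolding Pm_def by (intro continuous_intros)

lemma cont_Lm: "continuous_on A Lm"
  unfolding Lm_def by (intro continuous_intros)

lemma LP: "v \<in> plane \<Longrightarrow> Lm (Pm v) = v"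
  unfolding Lm_def Pm_def plane_def by (cases v) (auto simp: algebra_simps)

lemma PL: "Pm (Lm z) = z"
  unfolding Lm_def Pm_def by (simp add: complex_eq_iff)

lemma Lm_plane: "Lm z \<in> plane"
  unfolding Lm_def plane_def by simp

lemma closed_plane: "closed plane"
  unfolding plane_def by (rule closed_Collect_eq) (intro continuous_intros)+

lemma closed_hex: "closed (hexagon p)"
proof -
  have "hexagon p = plane \<inter> (\<Inter>q\<in>{q. tri_node q}. {v. dist v (Defs.embed p) \<le> dist v (Defs.embed q)})"
    unfolding hexagon_def plane_def by (auto split: prod.splits)
  moreover have "closed {v. dist v (Defs.embed p) \<le> dist v (Defs.embed q)}" for q
    by (intro closed_Collect_le continuous_intros)
  ultimately show ?thesis using closed_plane by (simp add: closed_INT closed_Int)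
qed

lemma compact_hex: "compact (hexagon p)"
proof -
  have "hexagon p \<subseteq> cball (Defs.embed p) 1" using hex_near by (simp add: subset_iff dist_commute)
  hence "bounded (hexagon p)" by (rule bounded_subset[rotated]) simp
  thus ?thesis using closed_hex by (simp add: compact_eq_bounded_closed)
qed

lemma compact_Uu: "finite S \<Longrightarrow> compact (Uu S)"
  unfolding Uu_def by (intro compact_UN compact_hex)

lemma Uu_plane: "Uu S \<subseteq> plane" unfolding Uu_def using hex_plane by blast

lemma complement_connected:
  assumes "finite S" "contractible (Uu S)"
  shows "path_connected (- (Pm ` Uu S))"
proof -
  have hom: "Uu S homeomorphic (Pm ` Uu S)"
  proof (rule homeomorphicI[where f = Pm and g = Lm])
    show "Pm ` Uu S = Pm ` Uu S" ..
    show "Lm ` Pm ` Uu S = Uu S" using LP Uu_plane by (force simp: image_image)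
    show "continuous_on (Uu S) Pm" by (rule cont_Pm)
    show "continuous_on (Pm ` Uu S) Lm" by (rule cont_Lm)
    show "\<And>x. x \<in> Uu S \<Longrightarrow> Lm (Pm x) = x" using LP Uu_plane by blast
    show "\<And>y. y \<in> Pm ` Uu S \<Longrightarrow> Pm (Lm y) = y" using PL by blast
  qed
  have c: "contractible (Pm ` Uu S)" using homeomorphic_contractible[OF assms(2) hom] .
  have k: "compact (Pm ` Uu S)" using compact_continuous_image[OF cont_Pm compact_Uu[OF assms(1)]] .
  have "connected (- (Pm ` Uu S))"
    using Borsukian_separation_compact[OF k] contractible_imp_Borsukian[OF c] by simp
  moreover have "open (- (Pm ` Uu S))" using k by (simp add: compact_imp_closed open_Compl)
  ultimately show ?thesis by (simp add: connected_open_path_connected)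
qed



lemma out_U:
  assumes tq: "tri_node q" and qS: "q \<notin> S"
  shows "Pm (Defs.embed q) \<notin> Pm ` Uu S"
proof
  assume "Pm (Defs.embed q) \<in> Pm ` Uu S"
  then obtain w where w: "w \<in> Uu S" "Pm (Defs.embed q) = Pm w" by blast
  have "w \<in> plane" using w(1) Uu_plane by blast
  hence "Defs.embed q = w" using LP[OF embed_plane[OF tq]] LP w(2) by metis
  then obtain p where "p \<in> S" "Defs.embed q \<in> hexagon p" using w(1) unfolding Uu_def by blast
  thus False using hex_center[OF tq] qS by blast
qed

lemma sqrt6: "12/5 < sqrt (6::real)"
  by (rule real_less_rsqrt) (simp add: power2_eq_square)

lemma topo_holefree:
  assumes fin: "finite S" and con: "contractible (Uu S)"
  shows "holefree S"
  unfolding holefree_def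
proof (intro allI impI)
  fix u v assume uv: "tri_node u \<and> tri_node v \<and> u \<notin> S \<and> v \<notin> S"
  let ?C = "- (Pm ` Uu S)"
  have pc: "path_connected ?C" by (rule complement_connected[OF fin con])
  have inC: "Pm (Defs.embed u) \<in> ?C" "Pm (Defs.embed v) \<in> ?C" using out_U uv by blast+
  obtain g where g: "path g" "path_image g \<subseteq> ?C" "pathstart g = Pm (Defs.embed u)"
      "pathfinish g = Pm (Defs.embed v)"
    using pc inC unfolding path_connected_def by blast
  define h where "h = Lm \<circ> g"
  have hc: "continuous_on {0..1} h" unfolding h_def using g(1) unfolding path_def
    by (intro continuous_on_compose cont_Lm) 
  have "uniformly_continuous_on {0..1} h" by (rule compact_uniformly_continuous[OF hc]) simp
  then obtain d where d: "d > 0" "\<And>s t. s \<in> {0..1} \<Longrightarrow> t \<in> {0..1} \<Longrightarrow> dist t s < d \<Longrightarrow> dist (h t) (h s) < 2/5"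
    unfolding uniformly_continuous_on_def by (metis zero_less_divide_iff zero_less_numeral)
  obtain K :: nat where K: "K \<noteq> 0" "inverse (real K) < d" using real_arch_inverse d(1) by blast
  let ?s = "\<lambda>k::nat. real k / real K"
  have s01: "\<And>k. k \<le> K \<Longrightarrow> ?s k \<in> {0..1}" using K by (simp add: divide_le_eq_1)
  define N where "N k = (SOME p. tri_node p \<and> h (?s k) \<in> hexagon p)" for k
  have hpl: "\<And>t. h t \<in> plane" unfolding h_def using Lm_plane by simp
  have Nk: "\<And>k. tri_node (N k) \<and> h (?s k) \<in> hexagon (N k)"
    unfolding N_def using nearest[OF hpl] by (rule someI_ex)
  have NS: "\<And>k. k \<le> K \<Longrightarrow> N k \<notin> S"
  proof
    fix k assume k: "k \<le> K" "N k \<in> S"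
    hence "h (?s k) \<in> Uu S" using Nk unfolding Uu_def by blast
    hence "Pm (h (?s k)) \<in> Pm ` Uu S" by blast
    moreover have "Pm (h (?s k)) = g (?s k)" unfolding h_def by (simp add: PL)
    moreover have "g (?s k) \<in> ?C" using g(2) s01[OF k(1)] unfolding path_image_def by blast
    ultimately show False by (metis ComplD)
  qed
  have N0: "N 0 = u"
  proof -
    have "h (?s 0) = Defs.embed u" using g(3) LP[OF embed_plane] uv unfolding h_def pathstart_def by simp
    thus ?thesis using Nk[of 0] hex_center uv by metis
  qed
  have NK: "N K = v"
  proof -
    have "?s K = 1" using K by simp
    hence "h (?s K) = Defs.embed v" using g(4) LP[OF embed_plane] uv unfolding h_def pathfinish_def by simp
    thus ?thesis using Nk[of K] hex_center uv by metis
  qed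
  have step: "\<And>k. k < K \<Longrightarrow> (N k, N (Suc k)) \<in> (Rc S)\<^sup>*"
  proof -
    fix k assume k: "k < K"
    have "dist (?s (Suc k)) (?s k) = inverse (real K)"
      using K by (simp add: dist_real_def divide_simps)
    hence "dist (h (?s (Suc k))) (h (?s k)) < 2/5" using d(2) s01 k K by simp
    moreover have "dist (h (?s k)) (Defs.embed (N k)) \<le> 1" "dist (h (?s (Suc k))) (Defs.embed (N (Suc k))) \<le> 1"
      using Nk hex_near by blast+
    moreover have "dist (Defs.embed (N k)) (Defs.embed (N (Suc k))) \<le>
        dist (Defs.embed (N k)) (h (?s k)) + dist (h (?s k)) (Defs.embed (N (Suc k)))"
      by (rule dist_triangle)
    moreover have "dist (h (?s k)) (Defs.embed (N (Suc k))) \<le>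
        dist (h (?s k)) (h (?s (Suc k))) + dist (h (?s (Suc k))) (Defs.embed (N (Suc k)))"
      by (rule dist_triangle)
    moreover have "dist (Defs.embed (N k)) (h (?s k)) = dist (h (?s k)) (Defs.embed (N k))"
      "dist (h (?s k)) (h (?s (Suc k))) = dist (h (?s (Suc k))) (h (?s k))" by (simp_all add: dist_commute)
    ultimately have "dist (Defs.embed (N k)) (Defs.embed (N (Suc k))) \<le> 12/5" by linarith
    hence "dist (Defs.embed (N k)) (Defs.embed (N (Suc k))) < sqrt 6" using sqrt6 by linarith
    hence "N k = N (Suc k) \<or> adj (N k) (N (Suc k))" using close_adj Nk by blast
    thus "(N k, N (Suc k)) \<in> (Rc S)\<^sup>*"
    proof
      assume "adj (N k) (N (Suc k))"
      hence "(N k, N (Suc k)) \<in> Rc S" using Nk NS k unfolding Rc_def by simp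
      thus ?thesis by blast
    qed simp
  qed
  have "\<And>k. k \<le> K \<Longrightarrow> (u, N k) \<in> (Rc S)\<^sup>*"
  proof -
    fix k show "k \<le> K \<Longrightarrow> (u, N k) \<in> (Rc S)\<^sup>*"
    proof (induction k)
      case 0 thus ?case using N0 by simp
    next
      case (Suc k)
      hence "(u, N k) \<in> (Rc S)\<^sup>*" by simp
      moreover have "(N k, N (Suc k)) \<in> (Rc S)\<^sup>*" using step Suc.prems by simp
      ultimately show ?case by (rule rtrancl_trans)
    qed
  qed
  thus "(u,v) \<in> (Rc S)\<^sup>*" using NK by blast
qed



definition Cand :: "node set \<Rightarrow> conf \<Rightarrow> node set" where
  "Cand S c = {A \<in> S. cand c A \<noteq> Some False}"

definition Inv :: "node set \<Rightarrow> conf \<Rightarrow> bool" where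
  "Inv S c \<longleftrightarrow> Cand S c \<noteq> {} \<and> induced_connected (Cand S c) \<and> chi6 (Cand S c) > 0 \<and>
     (\<forall>A\<in>S. ldr c A \<longrightarrow> Cand S c = {A})"

definition Pot :: "node set \<Rightarrow> conf \<Rightarrow> nat" where
  "Pot S c = card {A \<in> S. cand c A = None} + card (Cand S c) + (if \<exists>A\<in>S. ldr c A then 0 else 1)"

lemma conn_remove:
  assumes c: "induced_connected X" and AX: "A \<in> X"
    and K: "\<And>u v. u \<in> Nn X A \<Longrightarrow> v \<in> Nn X A \<Longrightarrow> (u,v) \<in> (E (X - {A}))\<^sup>*"
  shows "induced_connected (X - {A})"
  unfolding induced_connected_E
proof (intro ballI)
  fix u v assume u: "u \<in> X - {A}" and v: "v \<in> X - {A}"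
  let ?X = "X - {A}"
  have "(u,v) \<in> (E X)\<^sup>*" using c u v unfolding induced_connected_E by blast
  have main: "\<And>w. (u,w) \<in> (E X)\<^sup>* \<Longrightarrow> (w \<noteq> A \<longrightarrow> (u,w) \<in> (E ?X)\<^sup>*) \<and> (w = A \<longrightarrow> (\<exists>k\<in>Nn X A. (u,k) \<in> (E ?X)\<^sup>*))"
  proof -
    fix w assume "(u,w) \<in> (E X)\<^sup>*"
    thus "(w \<noteq> A \<longrightarrow> (u,w) \<in> (E ?X)\<^sup>*) \<and> (w = A \<longrightarrow> (\<exists>k\<in>Nn X A. (u,k) \<in> (E ?X)\<^sup>*))"
    proof (induction rule: rtrancl_induct)
      case base thus ?case using u by simp
    next
      case (step w w')
      have ww: "w \<in> X" "w' \<in> X" "adj w w'" using step(2) unfolding E_def by blast+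
      show ?case
      proof (cases "w = A")
        case True
        then obtain k where k: "k \<in> Nn X A" "(u,k) \<in> (E ?X)\<^sup>*" using step(3) by blast
        have "w' \<noteq> A" using ww True adj_irrefl by blast
        moreover have "w' \<in> Nn X A" using ww True unfolding Nn_def by blast
        ultimately have "(u,w') \<in> (E ?X)\<^sup>*" using K[OF k(1)] k(2) by (meson rtrancl_trans)
        thus ?thesis using \<open>w' \<noteq> A\<close> by blast
      next
        case False
        hence uw: "(u,w) \<in> (E ?X)\<^sup>*" using step(3) by blast
        show ?thesis
        proof (cases "w' = A")
          case True
          hence "w \<in> Nn X A" using ww adj_sym unfolding Nn_def by blast
          thus ?thesis using uw True by blast
        next
          case F2: False
          hence "(w,w') \<in> E ?X" using ww False unfolding E_def by blast
          thus ?thesis using uw F2 by (meson rtrancl.rtrancl_into_rtrancl)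
        qed
      qed
    qed
  qed
  show "(u,v) \<in> (E ?X)\<^sup>*" using main[OF \<open>(u,v) \<in> (E X)\<^sup>*\<close>] v by blast
qed

lemma Nn_Cand:
  assumes "\<forall>B\<in>nbrs S A. cand c B \<noteq> None"
  shows "Nn (Cand S c) A = Kset S c A"
proof
  show "Nn (Cand S c) A \<subseteq> Kset S c A"
  proof
    fix B assume "B \<in> Nn (Cand S c) A"
    hence B: "B \<in> S" "cand c B \<noteq> Some False" "adj A B" unfolding Nn_def Cand_def by blast+
    hence "B \<in> nbrs S A" unfolding nbrs_def by blast
    hence "cand c B \<noteq> None" using assms by blast
    hence "cand c B = Some True" using B(2) by (cases "cand c B") auto
    thus "B \<in> Kset S c A" using \<open>B \<in> nbrs S A\<close> unfolding Kset_def by blast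
  qed
  show "Kset S c A \<subseteq> Nn (Cand S c) A" unfolding Kset_def nbrs_def Nn_def Cand_def by auto
qed

lemma can_erode_card:
  assumes "can_erode S c A" "finite S"
  shows "1 \<le> card (Kset S c A) \<and> card (Kset S c A) \<le> 5"
  using assms(1) unfolding can_erode_def by (auto simp: card_insert_if)

lemma can_erode_conn:
  assumes "can_erode S c A" "Kset S c A \<subseteq> Y" "\<And>C. C \<in> S \<Longrightarrow> C \<noteq> A \<Longrightarrow> cand c C = Some True \<Longrightarrow> C \<in> Y"
  shows "\<And>u v. u \<in> Kset S c A \<Longrightarrow> v \<in> Kset S c A \<Longrightarrow> (u,v) \<in> (E Y)\<^sup>*"
proof -
  fix u v assume uv: "u \<in> Kset S c A" "v \<in> Kset S c A"
  let ?K = "Kset S c A"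
  consider "card ?K = 1" | "induced_connected ?K"
    | "\<exists>B D. B \<noteq> D \<and> ?K = {B, D} \<and>
        (\<exists>C\<in>S. C \<noteq> A \<and> cand c C = Some True \<and> adj B C \<and> adj C D)"
    using assms(1) unfolding can_erode_def by blast
  thus "(u,v) \<in> (E Y)\<^sup>*"
  proof cases
    case 1
    then obtain k where "?K = {k}" using card_1_singletonE by blast
    thus ?thesis using uv by simp
  next
    case 2
    hence "(u,v) \<in> (E ?K)\<^sup>*" using uv unfolding induced_connected_E by blast
    moreover have "(E ?K)\<^sup>* \<subseteq> (E Y)\<^sup>*" by (rule rtrancl_mono, rule E_mono, rule assms(2))
    ultimately show ?thesis by blast
  next
    case 3
    then obtain B D C where BD: "?K = {B, D}" "C \<in> S" "C \<noteq> A" "cand c C = Some True" "adj B C" "adj C D"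
      by blast
    have Y: "B \<in> Y" "D \<in> Y" "C \<in> Y" using BD assms(2,3) by blast+
    have e: "(B,C) \<in> E Y" "(C,B) \<in> E Y" "(C,D) \<in> E Y" "(D,C) \<in> E Y"
      using Y BD adj_sym unfolding E_def by blast+
    have "(B,D) \<in> (E Y)\<^sup>*" "(D,B) \<in> (E Y)\<^sup>*" using e by (meson converse_rtrancl_into_rtrancl r_into_rtrancl)+
    moreover have "u \<in> {B,D}" "v \<in> {B,D}" using uv BD by blast+
    ultimately show ?thesis by auto
  qed
qed

lemma InvD:
  assumes "Inv S c"
  shows "Cand S c \<noteq> {}" "induced_connected (Cand S c)" "chi6 (Cand S c) > 0"
    "\<And>A. A \<in> S \<Longrightarrow> ldr c A \<Longrightarrow> Cand S c = {A}"
  using assms unfolding Inv_def by blast+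

lemma Cand_sub: "Cand S c \<subseteq> S" unfolding Cand_def by blast

lemma tris_sub: "tris S \<Longrightarrow> X \<subseteq> S \<Longrightarrow> tris X" unfolding tris_def by blast

lemma inv_step:
  assumes fin: "finite S" and t: "tris S" and I: "Inv S c" and AS: "A \<in> S"
    and en: "enabled_act S c A a"
  shows "Inv S (apply_act c A a)"
proof (cases a)
  case Setup
  hence "cand c A = None" using en by simp
  hence "Cand S (apply_act c A a) = Cand S c" using Setup unfolding Cand_def by auto
  moreover have "ldr (apply_act c A a) = ldr c" using Setup by simp
  ultimately show ?thesis using I unfolding Inv_def by simp
next
  case Erode
  let ?X = "Cand S c" let ?c' = "apply_act c A a"
  have e: "cand c A = Some True" "\<forall>B\<in>nbrs S A. cand c B \<noteq> None" "can_erode S c A" using en Erode by simp_all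
  have AX: "A \<in> ?X" using e AS unfolding Cand_def by simp
  have C': "Cand S ?c' = ?X - {A}" using Erode unfolding Cand_def by auto
  have l': "ldr ?c' = ldr c" using Erode by simp
  have NK: "Nn ?X A = Kset S c A" by (rule Nn_Cand[OF e(2)])
  have kc: "1 \<le> card (Kset S c A)" "card (Kset S c A) \<le> 5" using can_erode_card[OF e(3) fin] by simp_all
  have tA: "tri_node A" using t AS unfolding tris_def by blast
  have finX: "finite ?X" using fin Cand_sub finite_subset by blast
  have tX: "tris ?X" using tris_sub[OF t Cand_sub] .
  have m: "mi (?X - {A}) A = card (Kset S c A)" using Nn_card[OF tA, of ?X] NK Mi_remove[OF tA] by simp
  have r: "1 \<le> ri (?X - {A}) A" using r_pos[of "?X - {A}" A] m kc by simp
  have "chi6 ?X = chi6 (?X - {A}) + 6 - 6 * int (ri (?X - {A}) A)" by (rule chi6_remove[OF finX AX tA])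
  hence chi: "chi6 (?X - {A}) > 0" using I r unfolding Inv_def by simp
  have KY: "Kset S c A \<subseteq> ?X - {A}" using NK adj_irrefl unfolding Nn_def by blast
  have "Kset S c A \<noteq> {}" using kc by (metis card.empty not_one_le_zero)
  hence ne: "?X - {A} \<noteq> {}" using KY by blast
  have conn: "induced_connected (?X - {A})"
  proof (rule conn_remove)
    show "induced_connected ?X" using I unfolding Inv_def by blast
    show "A \<in> ?X" by (rule AX)
    fix u v assume "u \<in> Nn ?X A" "v \<in> Nn ?X A"
    hence "u \<in> Kset S c A" "v \<in> Kset S c A" using NK by simp_all
    moreover have "\<And>C. C \<in> S \<Longrightarrow> C \<noteq> A \<Longrightarrow> cand c C = Some True \<Longrightarrow> C \<in> ?X - {A}"
      unfolding Cand_def by simp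
    ultimately show "(u,v) \<in> (E (?X - {A}))\<^sup>*" using can_erode_conn[OF e(3) KY] by blast
  qed
  have nol: "\<forall>B\<in>S. \<not> ldr c B"
  proof (intro ballI notI)
    fix B assume "B \<in> S" "ldr c B"
    hence "?X = {B}" using I unfolding Inv_def by blast
    hence "?X - {A} = {}" using AX by auto
    thus False using ne by simp
  qed
  show ?thesis unfolding Inv_def C' l' using ne conn chi nol by blast
next
  case DeclareLeader
  let ?X = "Cand S c" let ?c' = "apply_act c A a"
  have e: "cand c A = Some True" "\<forall>B\<in>nbrs S A. cand c B = Some False" using en DeclareLeader by simp_all
  have C': "Cand S ?c' = ?X" using DeclareLeader unfolding Cand_def by simp
  have l': "ldr ?c' = (ldr c)(A := True)" using DeclareLeader by simp
  have AX: "A \<in> ?X" using e AS unfolding Cand_def by simp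
  have single: "?X = {A}"
  proof (rule ccontr)
    assume "?X \<noteq> {A}"
    then obtain B where B: "B \<in> ?X" "B \<noteq> A" using AX by blast
    have "(A,B) \<in> (E ?X)\<^sup>*" using InvD(2)[OF I] AX B(1) unfolding induced_connected_E by blast
    then obtain B' where "(A,B') \<in> E ?X" using B(2) by (metis converse_rtranclE)
    hence B': "B' \<in> S" "adj A B'" "cand c B' \<noteq> Some False" unfolding E_def Cand_def by blast+
    hence "B' \<in> nbrs S A" unfolding nbrs_def by blast
    thus False using e(2) B' by blast
  qed
  show ?thesis unfolding Inv_def C' l' using I single unfolding Inv_def by auto
qed

lemma pot_step:
  assumes I: "Inv S c" and AS: "A \<in> S" and en: "enabled_act S c A a" and fin: "finite S"
  shows "apply_act c A a = c \<or> Pot S (apply_act c A a) < Pot S c"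
proof (cases a)
  case Setup
  let ?c' = "apply_act c A a"
  have n: "cand c A = None" using en Setup by simp
  have "Cand S ?c' = Cand S c" using Setup n unfolding Cand_def by auto
  moreover have "ldr ?c' = ldr c" using Setup by simp
  moreover have "{B \<in> S. cand ?c' B = None} = {B \<in> S. cand c B = None} - {A}" using Setup by auto
  moreover have "card ({B \<in> S. cand c B = None} - {A}) < card {B \<in> S. cand c B = None}"
    using n AS fin by (intro card_Diff1_less) auto
  ultimately show ?thesis unfolding Pot_def by simp
next
  case Erode
  let ?c' = "apply_act c A a"
  have n: "cand c A = Some True" using en Erode by simp
  have "Cand S ?c' = Cand S c - {A}" using Erode unfolding Cand_def by auto
  moreover have "card (Cand S c - {A}) < card (Cand S c)"
    using n AS fin Cand_sub finite_subset by (intro card_Diff1_less) (auto simp: Cand_def)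
  moreover have "ldr ?c' = ldr c" using Erode by simp
  moreover have "{B \<in> S. cand ?c' B = None} = {B \<in> S. cand c B = None}" using Erode n by auto
  ultimately show ?thesis unfolding Pot_def by simp
next
  case DeclareLeader
  let ?c' = "apply_act c A a"
  show ?thesis
  proof (cases "ldr c A")
    case True
    hence "(ldr c)(A := True) = ldr c" by (simp add: fun_upd_idem)
    hence "?c' = c" using DeclareLeader by (cases c) simp
    thus ?thesis by blast
  next
    case False
    have n: "cand c A = Some True" using en DeclareLeader by simp
    have nol: "\<not> (\<exists>B\<in>S. ldr c B)"
    proof
      assume "\<exists>B\<in>S. ldr c B"
      then obtain B where "B \<in> S" "ldr c B" by blast
      hence "Cand S c = {B}" using I unfolding Inv_def by blast
      moreover have "A \<in> Cand S c" using n AS unfolding Cand_def by simp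
      ultimately have "A = B" by auto
      thus False using False \<open>ldr c B\<close> by simp
    qed
    have "\<exists>B\<in>S. ldr ?c' B" using DeclareLeader AS by auto
    moreover have "Cand S ?c' = Cand S c" using DeclareLeader unfolding Cand_def by simp
    moreover have "{B \<in> S. cand ?c' B = None} = {B \<in> S. cand c B = None}" using DeclareLeader by simp
    ultimately show ?thesis using nol unfolding Pot_def by simp
  qed
qed

lemma Cand_fin: "finite S \<Longrightarrow> finite (Cand S c)" using Cand_sub finite_subset by blast

lemma pot_ge1: assumes "finite S" "Inv S c" shows "1 \<le> Pot S c"
proof -
  have "card (Cand S c) \<ge> 1" using InvD(1)[OF assms(2)] Cand_fin[OF assms(1)]
    by (metis card_0_eq less_one not_le)
  thus ?thesis unfolding Pot_def by simp
qed

lemma mi_pos: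
  assumes "induced_connected X" "a \<in> X" "b \<in> X" "a \<noteq> b" "tri_node a"
  shows "1 \<le> mi X a"
proof -
  have "(a,b) \<in> (E X)\<^sup>*" using assms unfolding induced_connected_E by blast
  then obtain a' where "(a,a') \<in> E X" using assms(4) by (metis converse_rtranclE)
  hence a': "a' \<in> X" "adj a a'" unfolding E_def by blast+
  then obtain i where "i < 6" "a' = nb a i" using adj_iff_nb[OF assms(5), of a'] by blast
  hence "i \<in> Mi X a" using a' unfolding Mi_def by blast
  hence "Mi X a \<noteq> {}" by blast
  thus ?thesis using fin_Mi[of X a] by (simp add: Suc_le_eq card_gt_0_iff)
qed

lemma progress:
  assumes fin: "finite S" and t: "tris S" and I: "Inv S c" and P: "Pot S c \<noteq> 1"
  shows "\<exists>A\<in>S. enabled S c A \<and> (\<forall>a. enabled_act S c A a \<longrightarrow> apply_act c A a \<noteq> c)"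
proof -
  let ?X = "Cand S c" let ?N = "{A \<in> S. cand c A = None}"
  have finX: "finite ?X" using Cand_fin[OF fin] .
  have tX: "tris ?X" using tris_sub[OF t Cand_sub] .
  have cX: "card ?X \<ge> 1" using InvD(1)[OF I] finX by (metis card_0_eq less_one not_le)
  consider (null) "?N \<noteq> {}" | (many) "?N = {}" "card ?X \<ge> 2" | (one) "?N = {}" "card ?X = 1" "\<not> (\<exists>A\<in>S. ldr c A)"
  proof (cases "?N = {}")
    case True
    show ?thesis
    proof (cases "card ?X \<ge> 2")
      case True thus ?thesis using \<open>?N = {}\<close> that by blast
    next
      case False
      hence "card ?X = 1" using cX by simp
      moreover have "\<not> (\<exists>A\<in>S. ldr c A)"
      proof
        assume "\<exists>A\<in>S. ldr c A"
        hence "Pot S c = 1" unfolding Pot_def using \<open>card ?X = 1\<close> by (simp only: \<open>?N = {}\<close> card.empty) simp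
        thus False using P by simp
      qed
      ultimately show ?thesis using \<open>?N = {}\<close> that by blast
    qed
  qed (blast)
  thus ?thesis
  proof cases
    case null
    then obtain A where A: "A \<in> S" "cand c A = None" by blast
    have "enabled S c A" unfolding enabled_def using A by (metis enabled_act.simps(1))
    moreover have "\<forall>a. enabled_act S c A a \<longrightarrow> apply_act c A a \<noteq> c"
    proof (intro allI impI)
      fix a assume "enabled_act S c A a"
      hence "a = Setup" using A by (cases a) auto
      hence "cand (apply_act c A a) A = Some True" by simp
      thus "apply_act c A a \<noteq> c" using A by auto
    qed
    ultimately show ?thesis using A by blast
  next
    case many
    have m1: "\<forall>a\<in>?X. 1 \<le> mi ?X a"
    proof
      fix a assume a: "a \<in> ?X"
      have "?X - {a} \<noteq> {}"
      proof
        assume "?X - {a} = {}"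
        hence "?X \<subseteq> {a}" by blast
        hence "card ?X \<le> card {a}" by (intro card_mono) simp_all
        hence "card ?X \<le> 1" by simp
        thus False using many by simp
      qed
      then obtain b where "b \<in> ?X" "b \<noteq> a" by blast
      thus "1 \<le> mi ?X a" using mi_pos[OF InvD(2)[OF I] a] tX a unfolding tris_def by blast
    qed
    obtain A where A: "A \<in> ?X" "ri ?X A = 1" "mi ?X A \<le> 3"
      using ex_erodible[OF finX tX InvD(3)[OF I] m1] by blast
    have AS: "A \<in> S" using A Cand_sub by blast
    have tA: "tri_node A" using t AS unfolding tris_def by blast
    have cA: "cand c A = Some True"
    proof -
      have "cand c A \<noteq> None"
      proof
        assume "cand c A = None"
        hence "A \<in> ?N" using AS by simp
        thus False using many(1) by simp
      qed
      moreover have "cand c A \<noteq> Some False" using A unfolding Cand_def by blast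
      ultimately show ?thesis by (cases "cand c A") auto
    qed
    have nn: "\<forall>B\<in>nbrs S A. cand c B \<noteq> None"
    proof (intro ballI notI)
      fix B assume "B \<in> nbrs S A" "cand c B = None"
      hence "B \<in> ?N" unfolding nbrs_def by simp
      thus False using many(1) by simp
    qed
    have NK: "Nn ?X A = Kset S c A" by (rule Nn_Cand[OF nn])
    have cardK: "card (Kset S c A) = mi ?X A" using Nn_card[OF tA, of ?X] NK by simp
    have "1 \<le> mi ?X A" using m1 A by blast
    hence k1: "1 \<le> card (Kset S c A)" using cardK by simp
    have conK: "induced_connected (Kset S c A)" using arc_connected[OF tA A(2)] NK by simp
    have ce: "can_erode S c A"
      unfolding can_erode_def using k1 cardK A(3) conK by (cases "card (Kset S c A) = 1") auto
    have enE: "enabled_act S c A Erode" using cA nn ce by simp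
    have "Kset S c A \<noteq> {}" using k1 by (metis card.empty not_one_le_zero)
    then obtain B where B: "B \<in> nbrs S A" "cand c B = Some True" unfolding Kset_def by blast
    have "\<forall>a. enabled_act S c A a \<longrightarrow> apply_act c A a \<noteq> c"
    proof (intro allI impI)
      fix a assume ea: "enabled_act S c A a"
      show "apply_act c A a \<noteq> c"
      proof (cases a)
        case Setup thus ?thesis using ea cA by simp
      next
        case Erode
        hence "cand (apply_act c A a) A = Some False" by simp
        thus ?thesis using cA by auto
      next
        case DeclareLeader thus ?thesis using ea B by auto
      qed
    qed
    moreover have "enabled S c A" unfolding enabled_def using AS enE by blast
    ultimately show ?thesis using AS by blast
  next
    case one
    then obtain A where XA: "?X = {A}" using card_1_singletonE by blast
    hence AS: "A \<in> S" using Cand_sub by blast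
    have cA: "cand c A = Some True"
    proof -
      have "cand c A \<noteq> None"
      proof
        assume "cand c A = None"
        hence "A \<in> ?N" using AS by simp
        thus False using one(1) by simp
      qed
      moreover have "cand c A \<noteq> Some False" using XA unfolding Cand_def by blast
      ultimately show ?thesis by (cases "cand c A") auto
    qed
    have nf: "\<forall>B\<in>nbrs S A. cand c B = Some False"
    proof
      fix B assume B: "B \<in> nbrs S A"
      hence "B \<in> S" "B \<noteq> A" using adj_irrefl unfolding nbrs_def by blast+
      hence "B \<notin> ?X" using XA by blast
      thus "cand c B = Some False" using \<open>B \<in> S\<close> unfolding Cand_def by blast
    qed
    have enD: "enabled_act S c A DeclareLeader" using cA nf by simp
    have K0: "Kset S c A = {}" using nf unfolding Kset_def by auto
    have nce: "\<not> can_erode S c A" unfolding can_erode_def K0 by simp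
    have "\<forall>a. enabled_act S c A a \<longrightarrow> apply_act c A a \<noteq> c"
    proof (intro allI impI)
      fix a assume ea: "enabled_act S c A a"
      show "apply_act c A a \<noteq> c"
      proof (cases a)
        case Setup thus ?thesis using ea cA by simp
      next
        case Erode thus ?thesis using ea nce by simp
      next
        case DeclareLeader
        hence "ldr (apply_act c A a) A" by simp
        moreover have "\<not> ldr c A" using one AS by blast
        ultimately show ?thesis by auto
      qed
    qed
    moreover have "enabled S c A" unfolding enabled_def using AS enD by blast
    ultimately show ?thesis using AS by blast
  qed
qed

lemma pot_dec:
  assumes "finite S" "tris S" "Inv S c" "Pot S c \<noteq> 1"
  shows "\<exists>A\<in>S. enabled S c A \<and> (\<forall>a. enabled_act S c A a \<longrightarrow> Pot S (apply_act c A a) < Pot S c)"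
proof -
  obtain A where A: "A \<in> S" "enabled S c A" "\<forall>a. enabled_act S c A a \<longrightarrow> apply_act c A a \<noteq> c"
    using progress[OF assms] by blast
  have "\<forall>a. enabled_act S c A a \<longrightarrow> Pot S (apply_act c A a) < Pot S c"
    using A pot_step[OF assms(3) A(1) _ assms(1)] by blast
  thus ?thesis using A by blast
qed

locale exec =
  fixes S c acts
  assumes fin: "finite S" and ne: "S \<noteq> {}" and t: "tris S" and conn: "induced_connected S"
    and chi: "chi6 S > 0" and ex: "execution S c acts"
begin

lemma step_cases: "(\<exists>A a. A \<in> S \<and> enabled_act S (c n) A a \<and> c (Suc n) = apply_act (c n) A a) \<or>
    ((\<forall>A\<in>S. \<not> enabled S (c n) A) \<and> c (Suc n) = c n)"
proof -
  have h: "case acts n of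
            Some (A, a) \<Rightarrow> A \<in> S \<and> enabled_act S (c n) A a \<and> c (Suc n) = apply_act (c n) A a
          | None \<Rightarrow> (\<forall>A\<in>S. \<not> enabled S (c n) A) \<and> c (Suc n) = c n"
    using ex unfolding execution_def by blast
  show ?thesis
  proof (cases "acts n")
    case None thus ?thesis using h by simp
  next
    case (Some p)
    obtain A a where p: "p = (A, a)" by (cases p)
    hence "A \<in> S \<and> enabled_act S (c n) A a \<and> c (Suc n) = apply_act (c n) A a" using h Some by simp
    thus ?thesis by blast
  qed
qed

lemma step_some: "acts n = Some (A, a) \<Longrightarrow> A \<in> S \<and> enabled_act S (c n) A a \<and> c (Suc n) = apply_act (c n) A a"
proof -
  assume a: "acts n = Some (A, a)"
  have h: "case acts n of
            Some (A, a) \<Rightarrow> A \<in> S \<and> enabled_act S (c n) A a \<and> c (Suc n) = apply_act (c n) A a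
          | None \<Rightarrow> (\<forall>A\<in>S. \<not> enabled S (c n) A) \<and> c (Suc n) = c n"
    using ex unfolding execution_def by blast
  thus ?thesis using a by simp
qed

lemma init: "\<forall>A\<in>S. cand (c 0) A = None \<and> \<not> ldr (c 0) A"
  using ex unfolding execution_def by blast

lemma inv: "Inv S (c n)"
proof (induction n)
  case 0
  have "Cand S (c 0) = S" using init unfolding Cand_def by auto
  thus ?case unfolding Inv_def using ne conn chi init by simp
next
  case (Suc n)
  from step_cases[of n] show ?case
  proof
    assume "\<exists>A a. A \<in> S \<and> enabled_act S (c n) A a \<and> c (Suc n) = apply_act (c n) A a"
    then obtain A a where "A \<in> S" "enabled_act S (c n) A a" "c (Suc n) = apply_act (c n) A a" by blast
    thus ?thesis using inv_step[OF fin t Suc.IH] by simp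
  qed (use Suc.IH in simp)
qed

lemma pstep: "c (Suc n) = c n \<or> Pot S (c (Suc n)) < Pot S (c n)"
proof -
  from step_cases[of n] show ?thesis
  proof
    assume "\<exists>A a. A \<in> S \<and> enabled_act S (c n) A a \<and> c (Suc n) = apply_act (c n) A a"
    then obtain A a where Aa: "A \<in> S" "enabled_act S (c n) A a" "c (Suc n) = apply_act (c n) A a" by blast
    show ?thesis using pot_step[OF inv[of n] Aa(1,2) fin] Aa(3) by simp
  qed simp
qed

lemma pmono: "n \<le> m \<Longrightarrow> Pot S (c m) \<le> Pot S (c n)"
proof (induction m)
  case 0 thus ?case by simp
next
  case (Suc m)
  show ?case
  proof (cases "n = Suc m")
    case True thus ?thesis by simp
  next
    case False
    hence "Pot S (c m) \<le> Pot S (c n)" using Suc by simp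
    moreover have "Pot S (c (Suc m)) \<le> Pot S (c m)" using pstep[of m] by auto
    ultimately show ?thesis by simp
  qed
qed

lemma peq: "n \<le> m \<Longrightarrow> Pot S (c m) = Pot S (c n) \<Longrightarrow> c m = c n"
proof (induction m)
  case 0 thus ?case by simp
next
  case (Suc m)
  show ?case
  proof (cases "n = Suc m")
    case True thus ?thesis by simp
  next
    case False
    hence nm: "n \<le> m" using Suc by simp
    have "Pot S (c m) \<le> Pot S (c n)" using pmono[OF nm] .
    moreover have "Pot S (c (Suc m)) \<le> Pot S (c m)" using pstep[of m] by auto
    ultimately have "Pot S (c m) = Pot S (c n)" "Pot S (c (Suc m)) = Pot S (c m)" using Suc.prems(2) by simp_all
    hence "c m = c n" "c (Suc m) = c m" using Suc.IH nm pstep[of m] by auto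
    thus ?thesis by simp
  qed
qed

lemma ldr_step: "ldr (c n) A \<Longrightarrow> ldr (c (Suc n)) A"
proof -
  assume l: "ldr (c n) A"
  from step_cases[of n] show ?thesis
  proof
    assume "\<exists>B a. B \<in> S \<and> enabled_act S (c n) B a \<and> c (Suc n) = apply_act (c n) B a"
    then obtain B a where "c (Suc n) = apply_act (c n) B a" by blast
    thus ?thesis using l by (cases a) auto
  qed (use l in simp)
qed

lemma ldr_mono: "n \<le> m \<Longrightarrow> ldr (c n) A \<Longrightarrow> ldr (c m) A"
proof (induction m)
  case 0 thus ?case by simp
next
  case (Suc m) thus ?case using ldr_step by (cases "n = Suc m") auto
qed

lemma round_dec:
  assumes rd: "round_done S c acts t t'" and P: "Pot S (c t) \<noteq> 1"
  shows "Pot S (c t') < Pot S (c t)"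
proof -
  obtain A where A: "A \<in> S" "enabled S (c t) A"
      "\<forall>a. enabled_act S (c t) A a \<longrightarrow> Pot S (apply_act (c t) A a) < Pot S (c t)"
    using pot_dec[OF fin t inv P] by blast
  obtain s where s: "t < s" "s \<le> t'" "(\<exists>a. acts (s - 1) = Some (A, a)) \<or> \<not> enabled S (c s) A"
    using rd A(2) unfolding round_done_def by blast
  have Ps: "Pot S (c s) < Pot S (c t)"
  proof (cases "Pot S (c (s - 1)) < Pot S (c t)")
    case True
    moreover have "Pot S (c s) \<le> Pot S (c (s - 1))" using pmono[of "s - 1" s] by simp
    ultimately show ?thesis by simp
  next
    case False
    hence "Pot S (c (s - 1)) = Pot S (c t)" using pmono[of t "s - 1"] s by simp
    hence cs: "c (s - 1) = c t" using peq[of t "s - 1"] s by simp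
    have sS: "Suc (s - 1) = s" using s by simp
    from s(3) show ?thesis
    proof
      assume "\<exists>a. acts (s - 1) = Some (A, a)"
      then obtain a where a: "acts (s - 1) = Some (A, a)" by blast
      hence "enabled_act S (c (s - 1)) A a \<and> c (Suc (s - 1)) = apply_act (c (s - 1)) A a"
        using step_some by blast
      thus ?thesis using A(3) cs sS by metis
    next
      assume ne: "\<not> enabled S (c s) A"
      show ?thesis
      proof (rule ccontr)
        assume "\<not> Pot S (c s) < Pot S (c t)"
        hence "Pot S (c s) = Pot S (c t)" using pmono[of t s] s by simp
        hence "c s = c t" using peq[of t s] s by simp
        thus False using ne A(2) by simp
      qed
    qed
  qed
  moreover have "Pot S (c t') \<le> Pot S (c s)" using pmono s by simp
  ultimately show ?thesis by simp
qed

lemma pot0: "Pot S (c 0) = 2 * card S + 1"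
proof -
  have "Cand S (c 0) = S" using init unfolding Cand_def by auto
  moreover have "{A \<in> S. cand (c 0) A = None} = S" using init by auto
  ultimately show ?thesis unfolding Pot_def using init by simp
qed

lemma round_bound: "round_start S c acts i t \<Longrightarrow> Pot S (c t) + i \<le> 2 * card S + 1 \<or> Pot S (c t) = 1"
proof (induction rule: round_start.induct)
  case 1 thus ?case using pot0 by simp
next
  case (2 i t)
  let ?t' = "LEAST t'. round_done S c acts t t'"
  have rd: "round_done S c acts t ?t'" using 2(2) by (rule LeastI_ex)
  hence tt: "t < ?t'" unfolding round_done_def by blast
  show ?case
  proof (cases "Pot S (c t) = 1")
    case True
    hence "Pot S (c ?t') \<le> 1" using pmono[of t ?t'] tt by simp
    moreover have "1 \<le> Pot S (c ?t')" using pot_ge1[OF fin inv] .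
    ultimately show ?thesis by simp
  next
    case False
    hence "Pot S (c ?t') < Pot S (c t)" using round_dec[OF rd] by blast
    thus ?thesis using 2(3) False by auto
  qed
qed

lemma final:
  assumes "Pot S (c t) = 1"
  shows "card {A \<in> S. ldr (c t) A} = 1"
proof -
  have "\<exists>A\<in>S. ldr (c t) A"
  proof (rule ccontr)
    assume "\<not> (\<exists>A\<in>S. ldr (c t) A)"
    hence "Pot S (c t) \<ge> card (Cand S (c t)) + 1" unfolding Pot_def by simp
    moreover have "card (Cand S (c t)) \<ge> 1" using InvD(1)[OF inv] Cand_fin[OF fin]
      by (metis card_0_eq less_one not_le)
    ultimately show False using assms by simp
  qed
  then obtain B where B: "B \<in> S" "ldr (c t) B" by blast
  have "{A \<in> S. ldr (c t) A} = {B}"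
  proof
    show "{B} \<subseteq> {A \<in> S. ldr (c t) A}" using B by blast
    show "{A \<in> S. ldr (c t) A} \<subseteq> {B}"
    proof
      fix A assume "A \<in> {A \<in> S. ldr (c t) A}"
      hence "Cand S (c t) = {A}" "Cand S (c t) = {B}" using InvD(4)[OF inv] B by blast+
      thus "A \<in> {B}" by simp
    qed
  qed
  thus ?thesis by simp
qed

lemma unique: "A \<in> S \<Longrightarrow> B \<in> S \<Longrightarrow> ldr (c n) A \<Longrightarrow> ldr (c n) B \<Longrightarrow> A = B"
proof -
  assume "A \<in> S" "B \<in> S" "ldr (c n) A" "ldr (c n) B"
  hence "Cand S (c n) = {A}" "Cand S (c n) = {B}" using InvD(4)[OF inv] by blast+
  thus "A = B" by simp
qed

end

theorem corollary4:
  "\<exists>C::nat. \<forall>S c acts.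
     finite S \<and> S \<noteq> {} \<and> (\<forall>p\<in>S. tri_node p) \<and> induced_connected S \<and>
     lattice_contractible S \<and> execution S c acts \<longrightarrow>
       (\<forall>t. \<forall>A\<in>S. \<forall>B\<in>S. ldr (c t) A \<and> ldr (c t) B \<longrightarrow> A = B) \<and>
       (\<forall>t t' A. A \<in> S \<and> t \<le> t' \<and> ldr (c t) A \<longrightarrow> ldr (c t') A) \<and>
       (\<forall>i t. round_start S c acts i t \<and> C * card S \<le> i \<longrightarrow>
              card {A \<in> S. ldr (c t) A} = 1)"
proof (intro exI[of _ 2] allI impI)
  fix S c acts
  assume H: "finite S \<and> S \<noteq> {} \<and> (\<forall>p\<in>S. tri_node p) \<and> induced_connected S \<and>
     lattice_contractible S \<and> execution S c acts"
  have fin: "finite S" and ne: "S \<noteq> {}" and t: "tris S" and conn: "induced_connected S"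
    and ex: "execution S c acts" using H unfolding tris_def by blast+
  have "contractible (Uu S)" using H unfolding lattice_contractible_def Uu_def by blast
  hence hf: "holefree S" by (rule topo_holefree[OF fin])
  have "chi6 S \<ge> 6" by (rule chi6_pos[OF fin ne t conn hf])
  hence chi: "chi6 S > 0" by simp
  interpret E: exec S c acts using fin ne t conn chi ex by unfold_locales
  show "(\<forall>t. \<forall>A\<in>S. \<forall>B\<in>S. ldr (c t) A \<and> ldr (c t) B \<longrightarrow> A = B) \<and>
       (\<forall>t t' A. A \<in> S \<and> t \<le> t' \<and> ldr (c t) A \<longrightarrow> ldr (c t') A) \<and>
       (\<forall>i t. round_start S c acts i t \<and> 2 * card S \<le> i \<longrightarrow>
              card {A \<in> S. ldr (c t) A} = 1)"
  proof (intro conjI allI impI ballI)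
    fix t A B assume "A \<in> S" "B \<in> S" "ldr (c t) A \<and> ldr (c t) B"
    thus "A = B" using E.unique by blast
  next
    fix t t' A assume "A \<in> S \<and> t \<le> t' \<and> ldr (c t) A"
    thus "ldr (c t') A" using E.ldr_mono by blast
  next
    fix i t assume r: "round_start S c acts i t \<and> 2 * card S \<le> i"
    hence "Pot S (c t) + i \<le> 2 * card S + 1 \<or> Pot S (c t) = 1" using E.round_bound by blast
    moreover have "1 \<le> Pot S (c t)" using pot_ge1[OF fin E.inv] .
    ultimately have "Pot S (c t) = 1" using r by linarith
    thus "card {A \<in> S. ldr (c t) A} = 1" by (rule E.final)
  qed
qed

end
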